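(* Work in a saturated structure. Let $G$ be a definable commutative group and $v:G\to I$ a definable function into a definable totally ordered set $I$ such that $v(a+b)\ge\min\{v(a),v(b)\}$ and $v(-a)=v(a)$ for all $a,b\in G$, and $v(0)$ is the maximum of $I$ with $v(a)=v(0)$ only for $a=0$. For $r\in I$ let $B_r=\{a\in G: v(a)\ge r\}$ and $B_r^-=\{a\in G: v(a)>r\}$. Suppose that every definable subset of $G$ is a Boolean combination of translates of sets of the form $B_r$, $B_r^-$ ($r\in I$), $\{0\}$ and $G$, and that $B_r/B_r^-$ is infinite for every $r\in I$ with $r<v(0)$. Then every type-definable subgroup of $G$ is a small intersection of definable subgroups, and every definable subgroup of $G$ is finite, or equal to $G$, or contains some $B_r$ or some $B_r^-$ as a subgroup of finite index.
   Context: Small means of cardinality less than the saturation of the ambient model; type-definable means a small intersection of definable sets; definable means definable with parameters. *)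

theory Defs
  imports "HOL-Algebra.Group" "HOL-Library.Equipollence"
begin

text \<open>Tuples of length n over the universe (type 'm) represent M^n.\<close>

abbreviation tuples :: "nat \<Rightarrow> 'm list set" where
  "tuples n \<equiv> {xs. length xs = n}"

text \<open>A first-order structure, given by its definable-with-parameters sets
(van den Dries' axioms): D n is the family of definable subsets of M^n.\<close>

definition def_structure :: "(nat \<Rightarrow> 'm list set set) \<Rightarrow> bool" where
  "def_structure D \<longleftrightarrow>
     (\<forall>n. \<forall>A\<in>D n. A \<subseteq> tuples n) \<and>
     (\<forall>n. {} \<in> D n) \<and>
     (\<forall>n. \<forall>A\<in>D n. tuples n - A \<in> D n) \<and>
     (\<forall>n. \<forall>A\<in>D n. \<forall>B\<in>D n. A \<union> B \<in> D n) \<and>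
     (\<forall>n. \<forall>A\<in>D n. {xs @ [y] | xs y. xs \<in> A} \<in> D (Suc n)) \<and>
     (\<forall>n. \<forall>A\<in>D n. {y # xs | xs y. xs \<in> A} \<in> D (Suc n)) \<and>
     (\<forall>n i j. i < n \<longrightarrow> j < n \<longrightarrow> {xs \<in> tuples n. xs ! i = xs ! j} \<in> D n) \<and>
     (\<forall>n. \<forall>A\<in>D (Suc n). butlast ` A \<in> D n) \<and>
     (\<forall>a. {[a]} \<in> D 1)"

definition saturated :: "(nat \<Rightarrow> 'm list set set) \<Rightarrow> 'k set \<Rightarrow> bool" where
  "saturated D K \<longleftrightarrow>
     (\<forall>n F. F \<subseteq> D n \<longrightarrow> F \<prec> K \<longrightarrow>
        (\<forall>F'. finite F' \<longrightarrow> F' \<subseteq> F \<longrightarrow> tuples n \<inter> \<Inter>F' \<noteq> {}) \<longrightarrow>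
        tuples n \<inter> \<Inter>F \<noteq> {})"

definition type_definable :: "(nat \<Rightarrow> 'm list set set) \<Rightarrow> 'k set \<Rightarrow> nat \<Rightarrow> 'm list set \<Rightarrow> bool" where
  "type_definable D K n X \<longleftrightarrow> (\<exists>F. F \<subseteq> D n \<and> F \<prec> K \<and> X = tuples n \<inter> \<Inter>F)"

inductive_set boolcomb :: "'a set \<Rightarrow> 'a set set \<Rightarrow> 'a set set" for U S where
  gen: "A \<in> S \<Longrightarrow> A \<in> boolcomb U S"
| compl: "A \<in> boolcomb U S \<Longrightarrow> U - A \<in> boolcomb U S"
| union: "A \<in> boolcomb U S \<Longrightarrow> B \<in> boolcomb U S \<Longrightarrow> A \<union> B \<in> boolcomb U S"

definition cosets_in :: "('a, 'b) monoid_scheme \<Rightarrow> 'a set \<Rightarrow> 'a set \<Rightarrow> 'a set set" where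
  "cosets_in Gr A X = {(\<lambda>x. a \<otimes>\<^bsub>Gr\<^esub> x) ` X | a. a \<in> A}"

end

theory Submission
  imports Defs
begin


definition dfn :: "(nat \<Rightarrow> 'm list set set) \<Rightarrow> nat \<Rightarrow> ('m list \<Rightarrow> bool) \<Rightarrow> bool" where
  "dfn D n P \<longleftrightarrow> {xs \<in> tuples n. P xs} \<in> D n"

definition tev :: "'m list \<Rightarrow> nat + 'm \<Rightarrow> 'm" where
  "tev xs t = (case t of Inl i \<Rightarrow> xs ! i | Inr c \<Rightarrow> c)"

context fixes D :: "nat \<Rightarrow> 'm list set set" assumes ds: "def_structure D"
begin

lemma ds_ax:
  shows ax1: "\<forall>n. \<forall>A\<in>D n. A \<subseteq> tuples n"
    and ax2: "\<forall>n. {} \<in> D n"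
    and ax3: "\<forall>n. \<forall>A\<in>D n. tuples n - A \<in> D n"
    and ax4: "\<forall>n. \<forall>A\<in>D n. \<forall>B\<in>D n. A \<union> B \<in> D n"
    and ax5: "\<forall>n. \<forall>A\<in>D n. {xs @ [y] | xs y. xs \<in> A} \<in> D (Suc n)"
    and ax6: "\<forall>n. \<forall>A\<in>D n. {y # xs | xs y. xs \<in> A} \<in> D (Suc n)"
    and ax7: "\<forall>n i j. i < n \<longrightarrow> j < n \<longrightarrow> {xs \<in> tuples n. xs ! i = xs ! j} \<in> D n"
    and ax8: "\<forall>n. \<forall>A\<in>D (Suc n). butlast ` A \<in> D n"
    and ax9: "\<forall>a. {[a]} \<in> D 1"
  by (insert ds, unfold def_structure_def, elim conjE, assumption)+

lemma ds_sub: "A \<in> D n \<Longrightarrow> A \<subseteq> tuples n"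
  using ax1 by blast

lemma ds_compl: "A \<in> D n \<Longrightarrow> tuples n - A \<in> D n"
  using ax3 by blast

lemma ds_union: "A \<in> D n \<Longrightarrow> B \<in> D n \<Longrightarrow> A \<union> B \<in> D n"
  using ax4 by blast

lemma ds_empty: "{} \<in> D n"
  using ax2 by blast

lemma ds_tuples: "tuples n \<in> D n"
  using ds_compl[OF ds_empty] by simp

lemma ds_inter: "A \<in> D n \<Longrightarrow> B \<in> D n \<Longrightarrow> A \<inter> B \<in> D n"
proof -
  assume a: "A \<in> D n" "B \<in> D n"
  have "A \<inter> B = tuples n - ((tuples n - A) \<union> (tuples n - B))"
    using ds_sub[OF a(1)] ds_sub[OF a(2)] by blast
  thus ?thesis using a by (simp add: ds_compl ds_union)
qed

lemma ds_finite_Union: "finite S \<Longrightarrow> S \<subseteq> D n \<Longrightarrow> \<Union>S \<in> D n"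
  by (induction S rule: finite_induct) (auto simp: ds_empty ds_union)

lemma ds_finite_Inter: "finite S \<Longrightarrow> S \<subseteq> D n \<Longrightarrow> A \<in> D n \<Longrightarrow> A \<inter> \<Inter>S \<in> D n"
proof (induction S rule: finite_induct)
  case empty thus ?case by simp
next
  case (insert x F)
  have "A \<inter> \<Inter>(insert x F) = x \<inter> (A \<inter> \<Inter>F)" by blast
  thus ?case using insert by (simp add: ds_inter)
qed

lemma dfn_D: "dfn D n P \<Longrightarrow> {xs \<in> tuples n. P xs} \<in> D n"
  by (simp add: dfn_def)

lemma dfn_set: "A \<in> D n \<Longrightarrow> dfn D n (\<lambda>xs. xs \<in> A)"
proof -
  assume a: "A \<in> D n"
  have "{xs \<in> tuples n. xs \<in> A} = A" using ds_sub[OF a] by blast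
  thus ?thesis using a by (simp add: dfn_def)
qed

lemma dfn_cong: "dfn D n P \<Longrightarrow> (\<And>xs. length xs = n \<Longrightarrow> P xs = Q xs) \<Longrightarrow> dfn D n Q"
proof -
  assume a: "dfn D n P" and b: "\<And>xs. length xs = n \<Longrightarrow> P xs = Q xs"
  have "{xs \<in> tuples n. P xs} = {xs \<in> tuples n. Q xs}" using b by auto
  thus ?thesis using a by (simp add: dfn_def)
qed

lemma dfn_not: "dfn D n P \<Longrightarrow> dfn D n (\<lambda>xs. \<not> P xs)"
proof -
  assume a: "dfn D n P"
  have "{xs \<in> tuples n. \<not> P xs} = tuples n - {xs \<in> tuples n. P xs}" by blast
  thus ?thesis using a ds_compl by (simp add: dfn_def)
qed

lemma dfn_disj: "dfn D n P \<Longrightarrow> dfn D n Q \<Longrightarrow> dfn D n (\<lambda>xs. P xs \<or> Q xs)"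
proof -
  assume a: "dfn D n P" "dfn D n Q"
  have "{xs \<in> tuples n. P xs \<or> Q xs} = {xs \<in> tuples n. P xs} \<union> {xs \<in> tuples n. Q xs}" by blast
  thus ?thesis using a ds_union by (simp add: dfn_def)
qed

lemma dfn_conj: "dfn D n P \<Longrightarrow> dfn D n Q \<Longrightarrow> dfn D n (\<lambda>xs. P xs \<and> Q xs)"
proof -
  assume a: "dfn D n P" "dfn D n Q"
  have "{xs \<in> tuples n. P xs \<and> Q xs} = {xs \<in> tuples n. P xs} \<inter> {xs \<in> tuples n. Q xs}" by blast
  thus ?thesis using a ds_inter by (simp add: dfn_def)
qed

lemma dfn_True: "dfn D n (\<lambda>xs. True)"
  using ds_tuples by (simp add: dfn_def)

lemma dfn_ex: "dfn D (n + m) P \<Longrightarrow> dfn D n (\<lambda>xs. \<exists>ys. length ys = m \<and> P (xs @ ys))"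
proof (induction m arbitrary: P)
  case 0
  show ?case by (rule dfn_cong[OF 0[simplified]]) auto
next
  case (Suc m)
  have A: "{zs \<in> tuples (Suc (n + m)). P zs} \<in> D (Suc (n + m))"
    using Suc.prems by (simp add: dfn_def)
  have "butlast ` {zs \<in> tuples (Suc (n + m)). P zs} \<in> D (n + m)"
    using ax8 A by blast
  moreover have "butlast ` {zs \<in> tuples (Suc (n + m)). P zs} = {xs \<in> tuples (n + m). \<exists>y. P (xs @ [y])}"
  proof (intro equalityI subsetI)
    fix xs assume "xs \<in> butlast ` {zs \<in> tuples (Suc (n + m)). P zs}"
    then obtain zs where z: "length zs = Suc (n + m)" "P zs" "xs = butlast zs" by auto
    have "zs \<noteq> []" using z(1) by auto
    then obtain us u where zs: "zs = us @ [u]" using rev_exhaust by blast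
    show "xs \<in> {xs \<in> tuples (n + m). \<exists>y. P (xs @ [y])}" using z unfolding zs by auto
  next
    fix xs assume "xs \<in> {xs \<in> tuples (n + m). \<exists>y. P (xs @ [y])}"
    then obtain y where "length xs = n + m" "P (xs @ [y])" by auto
    thus "xs \<in> butlast ` {zs \<in> tuples (Suc (n + m)). P zs}"
      by (intro image_eqI[of _ _ "xs @ [y]"]) auto
  qed
  ultimately have "dfn D (n + m) (\<lambda>xs. \<exists>y. P (xs @ [y]))" by (simp add: dfn_def)
  from Suc.IH[OF this] have "dfn D n (\<lambda>xs. \<exists>ys. length ys = m \<and> (\<exists>y. P (xs @ ys @ [y])))"
    by simp
  thus ?case
  proof (rule dfn_cong)
    fix xs :: "'m list"
    show "(\<exists>ys. length ys = m \<and> (\<exists>y. P (xs @ ys @ [y]))) = (\<exists>ys. length ys = Suc m \<and> P (xs @ ys))"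
    proof
      assume "\<exists>ys. length ys = m \<and> (\<exists>y. P (xs @ ys @ [y]))"
      then obtain ys y where "length ys = m" "P (xs @ ys @ [y])" by blast
      thus "\<exists>ys. length ys = Suc m \<and> P (xs @ ys)" by (intro exI[of _ "ys @ [y]"]) auto
    next
      assume "\<exists>ys. length ys = Suc m \<and> P (xs @ ys)"
      then obtain ys where y: "length ys = Suc m" "P (xs @ ys)" by blast
      have "ys \<noteq> []" using y(1) by auto
      then obtain us u where ys: "ys = us @ [u]" using rev_exhaust by blast
      show "\<exists>ys. length ys = m \<and> (\<exists>y. P (xs @ ys @ [y]))" using y unfolding ys
        by (intro exI[of _ us]) auto
    qed
  qed
qed

lemma dfn_append: "dfn D n P \<Longrightarrow> dfn D (n + m) (\<lambda>zs. P (take n zs))"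
proof (induction m)
  case 0
  show ?case by (simp, rule dfn_cong[OF 0]) simp
next
  case (Suc m)
  let ?A = "{zs \<in> tuples (n + m). P (take n zs)}"
  have A: "?A \<in> D (n + m)" using Suc by (simp add: dfn_def)
  have "{xs @ [y] | xs y. xs \<in> ?A} \<in> D (Suc (n + m))"
    using ax5 A by blast
  moreover have "{xs @ [y] | xs y. xs \<in> ?A} = {zs \<in> tuples (n + Suc m). P (take n zs)}"
  proof (intro equalityI subsetI)
    fix zs assume "zs \<in> {xs @ [y] | xs y. xs \<in> ?A}"
    thus "zs \<in> {zs \<in> tuples (n + Suc m). P (take n zs)}" by auto
  next
    fix zs assume z: "zs \<in> {zs \<in> tuples (n + Suc m). P (take n zs)}"
    have "zs \<noteq> []" using z by auto
    then obtain us u where zs: "zs = us @ [u]" using rev_exhaust by blast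
    have "take n us = take n zs" using z unfolding zs by simp
    thus "zs \<in> {xs @ [y] | xs y. xs \<in> ?A}" using z unfolding zs
      by (intro CollectI exI[of _ us] exI[of _ u]) simp
  qed
  ultimately show ?case by (simp add: dfn_def)
qed

lemma dfn_prepend: "dfn D n P \<Longrightarrow> dfn D (m + n) (\<lambda>zs. P (drop m zs))"
proof (induction m)
  case 0
  show ?case by (simp, rule dfn_cong[OF 0]) simp
next
  case (Suc m)
  let ?A = "{zs \<in> tuples (m + n). P (drop m zs)}"
  have A: "?A \<in> D (m + n)" using Suc by (simp add: dfn_def)
  have "{y # xs | xs y. xs \<in> ?A} \<in> D (Suc (m + n))"
    using ax6 A by blast
  moreover have "{y # xs | xs y. xs \<in> ?A} = {zs \<in> tuples (Suc m + n). P (drop (Suc m) zs)}"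
  proof (intro equalityI subsetI)
    fix zs assume "zs \<in> {y # xs | xs y. xs \<in> ?A}"
    thus "zs \<in> {zs \<in> tuples (Suc m + n). P (drop (Suc m) zs)}" by auto
  next
    fix zs assume z: "zs \<in> {zs \<in> tuples (Suc m + n). P (drop (Suc m) zs)}"
    then obtain y xs where "zs = y # xs" by (cases zs) auto
    thus "zs \<in> {y # xs | xs y. xs \<in> ?A}" using z by auto
  qed
  ultimately show ?case by (simp add: dfn_def)
qed

lemma dfn_eq: "i < n \<Longrightarrow> j < n \<Longrightarrow> dfn D n (\<lambda>xs. xs ! i = xs ! j)"
  using ax7 unfolding dfn_def by blast

lemma dfn_const: "i < n \<Longrightarrow> dfn D n (\<lambda>xs. xs ! i = c)"
proof -
  assume i: "i < n"
  have "{[c]} \<in> D 1" using ax9 by blast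
  hence "dfn D 1 (\<lambda>xs. xs \<in> {[c]})" by (rule dfn_set)
  hence "dfn D 1 (\<lambda>xs. xs ! 0 = c)"
    by (rule dfn_cong) (auto simp: length_Suc_conv)
  hence "dfn D (1 + (n - i - 1)) (\<lambda>zs. take 1 zs ! 0 = c)" by (rule dfn_append)
  hence "dfn D (i + (1 + (n - i - 1))) (\<lambda>zs. take 1 (drop i zs) ! 0 = c)" by (rule dfn_prepend)
  moreover have "i + (1 + (n - i - 1)) = n" using i by simp
  ultimately have "dfn D n (\<lambda>zs. take 1 (drop i zs) ! 0 = c)" by simp
  thus ?thesis
  proof (rule dfn_cong)
    fix xs :: "'m list" assume "length xs = n"
    hence "take 1 (drop i xs) ! 0 = xs ! i" using i by (subst nth_take) (auto simp: nth_drop)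
    thus "(take 1 (drop i xs) ! 0 = c) = (xs ! i = c)" by simp
  qed
qed

lemma dfn_all_lt: "(\<And>j. j < (m::nat) \<Longrightarrow> dfn D n (Q j)) \<Longrightarrow> dfn D n (\<lambda>xs. \<forall>j<m. Q j xs)"
proof (induction m)
  case 0 thus ?case using dfn_True by simp
next
  case (Suc m)
  have "dfn D n (\<lambda>xs. (\<forall>j<m. Q j xs) \<and> Q m xs)" using Suc by (intro dfn_conj) auto
  thus ?case by (rule dfn_cong) (auto simp: less_Suc_eq)
qed

lemma dfn_map:
  assumes A: "A \<in> D m" and len: "length ts = m"
    and ok: "\<And>i. Inl i \<in> set ts \<Longrightarrow> i < n"
  shows "dfn D n (\<lambda>xs. map (tev xs) ts \<in> A)"
proof -
  have "dfn D (n + m) (\<lambda>zs. drop n zs \<in> A \<and> (\<forall>j<m. zs ! (n + j) = tev zs (ts ! j)))"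
  proof (intro dfn_conj dfn_all_lt)
    show "dfn D (n + m) (\<lambda>zs. drop n zs \<in> A)" by (rule dfn_prepend[OF dfn_set[OF A]])
  next
    fix j assume j: "j < m"
    show "dfn D (n + m) (\<lambda>zs. zs ! (n + j) = tev zs (ts ! j))"
    proof (cases "ts ! j")
      case (Inl i)
      have "i < n" using ok[of i] Inl j len by (metis nth_mem)
      thus ?thesis using Inl j by (simp add: tev_def dfn_eq)
    next
      case (Inr c)
      thus ?thesis using j by (simp add: tev_def dfn_const)
    qed
  qed
  from dfn_ex[OF this] show ?thesis
  proof (rule dfn_cong)
    fix xs :: "'m list" assume xs: "length xs = n"
    have tv: "tev (xs @ ys) (ts ! j) = tev xs (ts ! j)" if "j < m" for ys j
    proof (cases "ts ! j")
      case (Inl i)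
      have "i < n" using ok[of i] Inl that len by (metis nth_mem)
      thus ?thesis using Inl xs by (simp add: tev_def nth_append)
    qed (simp add: tev_def)
    show "(\<exists>ys. length ys = m \<and> drop n (xs @ ys) \<in> A \<and> (\<forall>j<m. (xs @ ys) ! (n + j) = tev (xs @ ys) (ts ! j)))
          = (map (tev xs) ts \<in> A)"
    proof
      assume "\<exists>ys. length ys = m \<and> drop n (xs @ ys) \<in> A \<and> (\<forall>j<m. (xs @ ys) ! (n + j) = tev (xs @ ys) (ts ! j))"
      then obtain ys where y: "length ys = m" "drop n (xs @ ys) \<in> A"
        "\<forall>j<m. (xs @ ys) ! (n + j) = tev (xs @ ys) (ts ! j)" by blast
      have "ys = map (tev xs) ts"
        using y len tv xs by (intro nth_equalityI) (auto simp: nth_append)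
      thus "map (tev xs) ts \<in> A" using y xs by simp
    next
      assume "map (tev xs) ts \<in> A"
      thus "\<exists>ys. length ys = m \<and> drop n (xs @ ys) \<in> A \<and> (\<forall>j<m. (xs @ ys) ! (n + j) = tev (xs @ ys) (ts ! j))"
        using xs len tv by (intro exI[of _ "map (tev xs) ts"]) (auto simp: nth_append)
    qed
  qed
qed

end



definition tr :: "('a, 'b) monoid_scheme \<Rightarrow> 'a \<Rightarrow> 'a set \<Rightarrow> 'a set" where
  "tr G a S = (\<lambda>x. a \<otimes>\<^bsub>G\<^esub> x) ` S"

lemma (in group) id7: "c \<in> carrier G \<Longrightarrow> x \<in> carrier G \<Longrightarrow> x = c \<otimes> (inv c \<otimes> x)"
  by (simp add: m_assoc[symmetric])
lemma (in group) id6: assumes "c \<in> carrier G" "x \<in> carrier G" "y \<in> carrier G"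
  shows "inv (inv c \<otimes> y) \<otimes> (inv c \<otimes> x) = inv y \<otimes> x"
proof -
  have "inv (inv c \<otimes> y) = inv y \<otimes> c" using assms by (simp add: inv_mult_group)
  hence "inv (inv c \<otimes> y) \<otimes> (inv c \<otimes> x) = inv y \<otimes> (c \<otimes> (inv c \<otimes> x))" using assms by (simp add: m_assoc)
  also have "\<dots> = inv y \<otimes> x" using id7 assms by simp
  finally show ?thesis .
qed
lemma (in comm_group) id1: "c \<in> carrier G \<Longrightarrow> x \<in> carrier G \<Longrightarrow> y \<in> carrier G \<Longrightarrow> inv c \<otimes> y = (inv c \<otimes> x) \<otimes> (inv x \<otimes> y)"
  by (simp add: m_assoc[symmetric]) (simp add: m_assoc)
lemma (in comm_group) id2: "c \<in> carrier G \<Longrightarrow> h \<in> carrier G \<Longrightarrow> x \<in> carrier G \<Longrightarrow> inv c \<otimes> (inv h \<otimes> x) = inv (h \<otimes> c) \<otimes> x"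
  by (simp add: inv_mult m_ac)
lemma (in comm_group) id3: "c \<in> carrier G \<Longrightarrow> g \<in> carrier G \<Longrightarrow> y \<in> carrier G \<Longrightarrow> inv (inv c \<otimes> (g \<otimes> inv y)) = inv (g \<otimes> inv c) \<otimes> y"
  by (simp add: inv_mult m_ac)
lemma (in comm_group) id4: "g \<in> carrier G \<Longrightarrow> y \<in> carrier G \<Longrightarrow> g = (g \<otimes> inv y) \<otimes> y"
  by (simp add: m_assoc)

lemma (in comm_group) mem_tr:
  assumes "subgroup \<beta> G" "c \<in> carrier G" "x \<in> carrier G"
  shows "x \<in> tr G c \<beta> \<longleftrightarrow> inv c \<otimes> x \<in> \<beta>"
proof
  assume "x \<in> tr G c \<beta>"
  then obtain b where b: "b \<in> \<beta>" "x = c \<otimes> b" by (auto simp: tr_def)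
  have "b \<in> carrier G" using subgroup.mem_carrier[OF assms(1) b(1)] .
  hence "inv c \<otimes> x = b" using b assms by (simp add: inv_solve_left')
  thus "inv c \<otimes> x \<in> \<beta>" using b by simp
next
  assume "inv c \<otimes> x \<in> \<beta>"
  moreover have "x = c \<otimes> (inv c \<otimes> x)" by (rule id7[OF assms(2,3)])
  ultimately show "x \<in> tr G c \<beta>" unfolding tr_def by blast
qed

lemma (in comm_group) tr_sub: "subgroup \<beta> G \<Longrightarrow> c \<in> carrier G \<Longrightarrow> tr G c \<beta> \<subseteq> carrier G"
  unfolding tr_def using subgroup.subset[of \<beta> G] by auto

lemma (in comm_group) tr_same:
  assumes "subgroup \<beta> G" "c \<in> carrier G" "y \<in> tr G c \<beta>"
  shows "tr G y \<beta> = tr G c \<beta>"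
proof -
  have yc: "y \<in> carrier G" using tr_sub[OF assms(1,2)] assms(3) by (rule subsetD)
  have d: "inv c \<otimes> y \<in> \<beta>" using mem_tr[OF assms(1,2) yc] assms(3) by simp
  show ?thesis
  proof (intro equalityI subsetI)
    fix x assume x: "x \<in> tr G y \<beta>"
    have xc: "x \<in> carrier G" using tr_sub[OF assms(1) yc] x by (rule subsetD)
    have "inv y \<otimes> x \<in> \<beta>" using mem_tr[OF assms(1) yc xc] x by simp
    hence "(inv c \<otimes> y) \<otimes> (inv y \<otimes> x) \<in> \<beta>" by (rule subgroup.m_closed[OF assms(1) d])
    moreover have "(inv c \<otimes> y) \<otimes> (inv y \<otimes> x) = inv c \<otimes> x"
      using id1[of c y x] assms yc xc by simp
    ultimately show "x \<in> tr G c \<beta>" using mem_tr[OF assms(1,2) xc] by simp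
  next
    fix x assume x: "x \<in> tr G c \<beta>"
    have xc: "x \<in> carrier G" using tr_sub[OF assms(1,2)] x by (rule subsetD)
    have "inv c \<otimes> x \<in> \<beta>" using mem_tr[OF assms(1,2) xc] x by simp
    hence "inv (inv c \<otimes> y) \<otimes> (inv c \<otimes> x) \<in> \<beta>" by (rule subgroup.m_closed[OF assms(1) subgroup.m_inv_closed[OF assms(1) d]])
    moreover have "inv (inv c \<otimes> y) \<otimes> (inv c \<otimes> x) = inv y \<otimes> x"
      using id6 assms yc xc by simp
    ultimately show "x \<in> tr G y \<beta>" using mem_tr[OF assms(1) yc xc] by simp
  qed
qed

lemma (in comm_group) cover_in_H:
  assumes H: "subgroup H G" and b: "subgroup \<beta> G" and A: "finite A" "A \<subseteq> carrier G"
    and cov: "H \<subseteq> (\<Union>a\<in>A. tr G a \<beta>)"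
  shows "\<exists>H0. finite H0 \<and> H0 \<subseteq> H \<and> H \<subseteq> (\<Union>h\<in>H0. tr G h \<beta>)"
proof -
  let ?A' = "{a \<in> A. H \<inter> tr G a \<beta> \<noteq> {}}"
  define f where "f a = (SOME h. h \<in> H \<inter> tr G a \<beta>)" for a
  have fa: "f a \<in> H \<inter> tr G a \<beta>" if "a \<in> ?A'" for a
  proof -
    have "\<exists>h. h \<in> H \<inter> tr G a \<beta>" using that by blast
    thus ?thesis unfolding f_def by (rule someI_ex)
  qed
  show ?thesis
  proof (intro exI conjI)
    show "finite (f ` ?A')" using A by simp
    show "f ` ?A' \<subseteq> H" using fa by blast
    show "H \<subseteq> (\<Union>h\<in>f ` ?A'. tr G h \<beta>)"
    proof
      fix x assume x: "x \<in> H"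
      then obtain a where a: "a \<in> A" "x \<in> tr G a \<beta>" using cov by blast
      hence aa: "a \<in> ?A'" using x by blast
      have "tr G (f a) \<beta> = tr G a \<beta>" using tr_same[OF b] fa[OF aa] a A by blast
      thus "x \<in> (\<Union>h\<in>f ` ?A'. tr G h \<beta>)" using a aa by blast
    qed
  qed
qed


lemma chain_min:
  assumes "finite C" "C \<noteq> {}" "\<And>x y. x \<in> C \<Longrightarrow> y \<in> C \<Longrightarrow> x \<subseteq> y \<or> y \<subseteq> x"
  shows "\<exists>b\<in>C. \<forall>c\<in>C. b \<subseteq> c"
  using assms
proof (induction C rule: finite_ne_induct)
  case (singleton x) thus ?case by simp
next
  case (insert x F)
  then obtain m where m: "m \<in> F" "\<forall>c\<in>F. m \<subseteq> c" by auto
  show ?case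
  proof (cases "x \<subseteq> m")
    case True
    have "\<forall>c\<in>insert x F. x \<subseteq> c" using True m(2) by (auto intro: order_trans)
    thus ?thesis by blast
  next
    case False
    hence "m \<subseteq> x" using insert.prems m(1) by blast
    hence "\<forall>c\<in>insert x F. m \<subseteq> c" using m(2) by auto
    thus ?thesis using m(1) by blast
  qed
qed

lemma chain_max:
  assumes "finite C" "C \<noteq> {}" "\<And>x y. x \<in> C \<Longrightarrow> y \<in> C \<Longrightarrow> x \<subseteq> y \<or> y \<subseteq> x"
  shows "\<exists>b\<in>C. \<forall>c\<in>C. c \<subseteq> b"
  using assms
proof (induction C rule: finite_ne_induct)
  case (singleton x) thus ?case by simp
next
  case (insert x F)
  then obtain m where m: "m \<in> F" "\<forall>c\<in>F. c \<subseteq> m" by auto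
  show ?case
  proof (cases "m \<subseteq> x")
    case True
    have "\<forall>c\<in>insert x F. c \<subseteq> x" using True m(2) by (auto intro: order_trans)
    thus ?thesis by blast
  next
    case False
    hence "x \<subseteq> m" using insert.prems m(1) by blast
    hence "\<forall>c\<in>insert x F. c \<subseteq> m" using m(2) by auto
    thus ?thesis using m(1) by blast
  qed
qed

locale core = comm_group G for G (structure) +
  fixes Bs :: "'a set set"
  assumes Bs_sub: "\<beta> \<in> Bs \<Longrightarrow> subgroup \<beta> G"
    and Bs_chain: "\<beta> \<in> Bs \<Longrightarrow> \<gamma> \<in> Bs \<Longrightarrow> \<beta> \<subseteq> \<gamma> \<or> \<gamma> \<subseteq> \<beta>"
    and Bs_inf: "\<beta> \<in> Bs \<Longrightarrow> \<gamma> \<in> Bs \<Longrightarrow> \<beta> \<subset> \<gamma> \<Longrightarrow> infinite {tr G a \<beta> | a. a \<in> \<gamma>}"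
    and Bs_one: "{\<one>} \<in> Bs" and Bs_car: "carrier G \<in> Bs"
begin

lemma avoid:
  assumes b: "\<beta>' \<in> Bs" "\<beta> \<in> Bs" "\<beta>' \<subset> \<beta>" and A: "finite A" "A \<subseteq> carrier G"
  shows "\<exists>y\<in>\<beta>. \<forall>a\<in>A. y \<notin> tr G a \<beta>'"
proof (rule ccontr)
  assume "\<not> ?thesis"
  hence cov: "\<forall>y\<in>\<beta>. \<exists>a\<in>A. y \<in> tr G a \<beta>'" by blast
  have "{tr G a \<beta>' | a. a \<in> \<beta>} \<subseteq> (\<lambda>a. tr G a \<beta>') ` A"
  proof
    fix C assume "C \<in> {tr G a \<beta>' | a. a \<in> \<beta>}"
    then obtain y where y: "y \<in> \<beta>" "C = tr G y \<beta>'" by blast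
    then obtain a where a: "a \<in> A" "y \<in> tr G a \<beta>'" using cov by blast
    have ac: "a \<in> carrier G" using a(1) A(2) by blast
    have "tr G y \<beta>' = tr G a \<beta>'" by (rule tr_same[OF Bs_sub[OF b(1)] ac a(2)])
    thus "C \<in> (\<lambda>a. tr G a \<beta>') ` A" using y a by blast
  qed
  hence "finite {tr G a \<beta>' | a. a \<in> \<beta>}" by (rule finite_subset[OF _ finite_imageI[OF A(1)]])
  thus False using Bs_inf[OF b] by simp
qed

lemma shift_mem:
  assumes "subgroup \<gamma> G" "u \<in> carrier G" "d \<in> \<gamma>"
  shows "u \<otimes> d \<in> \<gamma> \<longleftrightarrow> u \<in> \<gamma>"
proof
  have dc: "d \<in> carrier G" using subgroup.mem_carrier[OF assms(1,3)] .
  assume "u \<otimes> d \<in> \<gamma>"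
  hence "(u \<otimes> d) \<otimes> inv d \<in> \<gamma>" by (rule subgroup.m_closed[OF assms(1) _ subgroup.m_inv_closed[OF assms(1,3)]])
  thus "u \<in> \<gamma>" using assms dc by (simp add: m_assoc)
next
  assume "u \<in> \<gamma>" thus "u \<otimes> d \<in> \<gamma>" by (rule subgroup.m_closed[OF assms(1) _ assms(3)])
qed

theorem core_thm:
  assumes H: "subgroup H G" and fS: "finite S" and SS: "S \<subseteq> carrier G \<times> Bs"
    and det: "\<And>x y. x \<in> carrier G \<Longrightarrow> y \<in> carrier G \<Longrightarrow>
                (\<forall>p\<in>S. x \<in> tr G (fst p) (snd p) \<longleftrightarrow> y \<in> tr G (fst p) (snd p)) \<Longrightarrow> (x \<in> Y \<longleftrightarrow> y \<in> Y)"
    and HY: "H \<subseteq> Y"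
  shows "\<exists>\<beta>\<in>Bs. \<exists>H0. finite H0 \<and> H0 \<subseteq> H \<and> H \<subseteq> (\<Union>h\<in>H0. tr G h \<beta>) \<and>
            (\<forall>g\<in>\<beta>. \<exists>y1\<in>Y. \<exists>y2\<in>Y. g = y1 \<otimes> y2)"
proof -
  define Bf where "Bf = snd ` S \<union> {{\<one>}, carrier G}"
  have Bf_fin: "finite Bf" using fS by (simp add: Bf_def)
  have Bf_Bs: "Bf \<subseteq> Bs" using SS Bs_one Bs_car by (auto simp: Bf_def)
  define C where "C = {\<beta> \<in> Bf. \<exists>A. finite A \<and> A \<subseteq> carrier G \<and> H \<subseteq> (\<Union>a\<in>A. tr G a \<beta>)}"
  have "carrier G \<in> C"
  proof -
    have "tr G \<one> (carrier G) = carrier G" by (force simp: tr_def)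
    moreover have "H \<subseteq> carrier G" using subgroup.subset[OF H] .
    ultimately show ?thesis unfolding C_def Bf_def by (intro CollectI conjI exI[of _ "{\<one>}"]) auto
  qed
  hence Cne: "C \<noteq> {}" by blast
  have Cch: "\<And>x y. x \<in> C \<Longrightarrow> y \<in> C \<Longrightarrow> x \<subseteq> y \<or> y \<subseteq> x"
    using Bs_chain Bf_Bs unfolding C_def by blast
  have "finite C" using Bf_fin by (simp add: C_def)
  then obtain \<beta> where bC: "\<beta> \<in> C" and bmin: "\<forall>\<gamma>\<in>C. \<beta> \<subseteq> \<gamma>"
    using chain_min[OF _ Cne Cch] by blast
  have bBs: "\<beta> \<in> Bs" and bBf: "\<beta> \<in> Bf" using bC Bf_Bs by (auto simp: C_def)
  have bsub: "subgroup \<beta> G" using Bs_sub bBs by blast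
  obtain A where A: "finite A" "A \<subseteq> carrier G" "H \<subseteq> (\<Union>a\<in>A. tr G a \<beta>)" using bC by (auto simp: C_def)
  obtain H0 where H0: "finite H0" "H0 \<subseteq> H" "H \<subseteq> (\<Union>h\<in>H0. tr G h \<beta>)"
    using cover_in_H[OF H bsub A] by blast
  have one_Y: "\<one> \<in> Y" using HY subgroup.one_closed[OF H] by blast
  show ?thesis
  proof (cases "\<beta> = {\<one>}")
    case True
    have "\<one> = \<one> \<otimes> \<one>" by simp
    thus ?thesis using H0 bBs one_Y True by (intro bexI[of _ \<beta>] exI[of _ H0]) blast+
  next
    case False
    define L where "L = {\<gamma> \<in> Bf. \<gamma> \<subset> \<beta>}"
    have "{\<one>} \<subseteq> \<beta>" using subgroup.one_closed[OF bsub] by blast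
    hence "{\<one>} \<in> L" using False by (auto simp: L_def Bf_def)
    hence Lne: "L \<noteq> {}" by blast
    have Lch: "\<And>x y. x \<in> L \<Longrightarrow> y \<in> L \<Longrightarrow> x \<subseteq> y \<or> y \<subseteq> x"
      using Bs_chain Bf_Bs unfolding L_def by blast
    have "finite L" using Bf_fin by (simp add: L_def)
    then obtain \<beta>' where b'L: "\<beta>' \<in> L" and b'max: "\<forall>\<gamma>\<in>L. \<gamma> \<subseteq> \<beta>'"
      using chain_max[OF _ Lne Lch] by blast
    have b'Bs: "\<beta>' \<in> Bs" and b'Bf: "\<beta>' \<in> Bf" and b'lt: "\<beta>' \<subset> \<beta>" using b'L Bf_Bs by (auto simp: L_def)
    have b'sub: "subgroup \<beta>' G" using Bs_sub b'Bs by blast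
    have b'C: "\<beta>' \<notin> C" using bmin b'lt by blast
    define Cs where "Cs = fst ` {p \<in> S. snd p \<subseteq> \<beta>'}"
    have Cs: "finite Cs" "Cs \<subseteq> carrier G" using fS SS by (auto simp: Cs_def)
    define E where "E = (\<Union>c\<in>Cs. tr G c \<beta>')"
    have bcar: "\<beta> \<subseteq> carrier G" using subgroup.subset[OF bsub] .
    have claimA: "x \<in> Y \<longleftrightarrow> y \<in> Y" if x: "x \<in> \<beta>" "x \<notin> E" and y: "y \<in> \<beta>" "y \<notin> E" for x y
    proof (rule det)
      show xc: "x \<in> carrier G" and yc: "y \<in> carrier G" using x y bcar by auto
      show "\<forall>p\<in>S. x \<in> tr G (fst p) (snd p) \<longleftrightarrow> y \<in> tr G (fst p) (snd p)"
      proof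
        fix p assume p: "p \<in> S"
        obtain c \<gamma> where pc: "p = (c, \<gamma>)" by (cases p)
        have c: "c \<in> carrier G" and gB: "\<gamma> \<in> Bs"
          using p SS pc by auto
        have gBf: "\<gamma> \<in> Bf" using p pc unfolding Bf_def by (metis UnI1 image_eqI snd_conv)
        have gsub: "subgroup \<gamma> G" using Bs_sub gB by blast
        show "x \<in> tr G (fst p) (snd p) \<longleftrightarrow> y \<in> tr G (fst p) (snd p)"
        proof (cases "\<gamma> \<subseteq> \<beta>'")
          case True
          have "p \<in> {p \<in> S. snd p \<subseteq> \<beta>'}" using p pc True by simp
          hence "fst p \<in> Cs" unfolding Cs_def by (rule imageI)
          hence cCs: "c \<in> Cs" using pc by simp
          have "tr G c \<gamma> \<subseteq> tr G c \<beta>'" using True by (auto simp: tr_def)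
          hence "tr G c \<gamma> \<subseteq> E" using cCs by (auto simp: E_def)
          thus ?thesis using pc x y by auto
        next
          case False
          have "\<not> \<gamma> \<subset> \<beta>" using False b'max gBf by (auto simp: L_def)
          hence bg: "\<beta> \<subseteq> \<gamma>" using Bs_chain[OF gB bBs] by blast
          have "inv x \<otimes> y \<in> \<beta>"
            by (rule subgroup.m_closed[OF bsub subgroup.m_inv_closed[OF bsub x(1)] y(1)])
          hence d: "inv x \<otimes> y \<in> \<gamma>" using bg by blast
          have "inv c \<otimes> y = (inv c \<otimes> x) \<otimes> (inv x \<otimes> y)"
            using c xc yc by (rule id1)
          hence "inv c \<otimes> y \<in> \<gamma> \<longleftrightarrow> inv c \<otimes> x \<in> \<gamma>" using shift_mem[OF gsub _ d] c xc by simp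
          thus ?thesis using mem_tr[OF gsub c] xc yc pc by simp
        qed
      qed
    qed
    have claimB: "\<exists>h\<in>H \<inter> \<beta>. h \<notin> E"
    proof (rule ccontr)
      assume "\<not> ?thesis"
      hence HE: "H \<inter> \<beta> \<subseteq> E" by blast
      let ?A = "(\<lambda>(h, c). h \<otimes> c) ` (H0 \<times> Cs)"
      have "H \<subseteq> (\<Union>a\<in>?A. tr G a \<beta>')"
      proof
        fix x assume x: "x \<in> H"
        then obtain h where h: "h \<in> H0" "x \<in> tr G h \<beta>" using H0 by blast
        have hc: "h \<in> carrier G" and hH: "h \<in> H" using h H0 subgroup.subset[OF H] by blast+
        have xc: "x \<in> carrier G" using x subgroup.subset[OF H] by blast
        have "inv h \<otimes> x \<in> \<beta>" using mem_tr[OF bsub hc xc] h(2) by simp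
        moreover have "inv h \<otimes> x \<in> H" by (rule subgroup.m_closed[OF H subgroup.m_inv_closed[OF H hH] x])
        ultimately have "inv h \<otimes> x \<in> E" using HE by blast
        then obtain c where c: "c \<in> Cs" "inv h \<otimes> x \<in> tr G c \<beta>'" by (auto simp: E_def)
        have cc: "c \<in> carrier G" using c Cs by blast
        have "inv c \<otimes> (inv h \<otimes> x) \<in> \<beta>'" using mem_tr[OF b'sub cc] c hc xc by simp
        moreover have "inv c \<otimes> (inv h \<otimes> x) = inv (h \<otimes> c) \<otimes> x"
          using cc hc xc by (rule id2)
        ultimately have "x \<in> tr G (h \<otimes> c) \<beta>'" using mem_tr[OF b'sub _ xc] hc cc by simp
        thus "x \<in> (\<Union>a\<in>?A. tr G a \<beta>')" using h c by blast
      qed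
      moreover have "finite ?A" using H0 Cs by simp
      moreover have "?A \<subseteq> carrier G"
      proof
        fix z assume "z \<in> ?A"
        then obtain h c where z: "h \<in> H0" "c \<in> Cs" "z = h \<otimes> c" by auto
        have "h \<in> carrier G" using z(1) H0(2) subgroup.subset[OF H] by blast
        moreover have "c \<in> carrier G" using z(2) Cs by blast
        ultimately show "z \<in> carrier G" using z by simp
      qed
      ultimately have "\<beta>' \<in> C" using b'Bf unfolding C_def by blast
      thus False using b'C by blast
    qed
    then obtain h where h: "h \<in> H" "h \<in> \<beta>" "h \<notin> E" by blast
    have inY: "z \<in> Y" if "z \<in> \<beta>" "z \<notin> E" for z
      using claimA[OF that h(2,3)] h HY by blast
    have "\<forall>g\<in>\<beta>. \<exists>y1\<in>Y. \<exists>y2\<in>Y. g = y1 \<otimes> y2"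
    proof
      fix g assume g: "g \<in> \<beta>"
      have gc: "g \<in> carrier G" using g bcar by blast
      let ?A2 = "Cs \<union> (\<lambda>c. g \<otimes> inv c) ` Cs"
      have "finite ?A2" "?A2 \<subseteq> carrier G" using Cs gc by auto
      then obtain y where y: "y \<in> \<beta>" "\<forall>a\<in>?A2. y \<notin> tr G a \<beta>'"
        using avoid[OF b'Bs bBs b'lt] by blast
      have yc: "y \<in> carrier G" using y bcar by blast
      have yE: "y \<notin> E" using y by (auto simp: E_def)
      have gy: "g \<otimes> inv y \<in> \<beta>" by (rule subgroup.m_closed[OF bsub g subgroup.m_inv_closed[OF bsub y(1)]])
      have gyE: "g \<otimes> inv y \<notin> E"
      proof
        assume "g \<otimes> inv y \<in> E"
        then obtain c where c: "c \<in> Cs" "g \<otimes> inv y \<in> tr G c \<beta>'" by (auto simp: E_def)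
        have cc: "c \<in> carrier G" using c Cs by blast
        have "inv c \<otimes> (g \<otimes> inv y) \<in> \<beta>'" using mem_tr[OF b'sub cc] c gc yc by simp
        hence "inv (inv c \<otimes> (g \<otimes> inv y)) \<in> \<beta>'" by (rule subgroup.m_inv_closed[OF b'sub])
        moreover have "inv (inv c \<otimes> (g \<otimes> inv y)) = inv (g \<otimes> inv c) \<otimes> y"
          using cc gc yc by (rule id3)
        ultimately have "y \<in> tr G (g \<otimes> inv c) \<beta>'" using mem_tr[OF b'sub _ yc] cc gc by simp
        thus False using y c by blast
      qed
      have "g = (g \<otimes> inv y) \<otimes> y" using gc yc by (rule id4)
      thus "\<exists>y1\<in>Y. \<exists>y2\<in>Y. g = y1 \<otimes> y2" using inY[OF gy gyE] inY[OF y(1) yE] by blast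
    qed
    thus ?thesis using H0 bBs by blast
  qed
qed

end



locale setting =
  fixes D :: "nat \<Rightarrow> 'm list set set" and K :: "'k set"
    and Gr :: "'m list monoid" (structure) and k :: nat
    and I :: "'m list set" and l :: nat and le :: "'m list \<Rightarrow> 'm list \<Rightarrow> bool"
    and v :: "'m list \<Rightarrow> 'm list" and B :: "'m list \<Rightarrow> 'm list set" and Bm :: "'m list \<Rightarrow> 'm list set"
  assumes B_def: "B = (\<lambda>r. {a \<in> carrier Gr. le r (v a)})"
      and Bm_def: "Bm = (\<lambda>r. {a \<in> carrier Gr. le r (v a) \<and> r \<noteq> v a})"
    and struct: "def_structure D"
    and sat: "saturated D K" and uncountable: "\<not> K \<lesssim> (UNIV :: nat set)"
    and grp: "comm_group Gr"
    and G_def: "carrier Gr \<in> D k"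
    and mult_def: "{xs @ ys @ (xs \<otimes>\<^bsub>Gr\<^esub> ys) | xs ys. xs \<in> carrier Gr \<and> ys \<in> carrier Gr} \<in> D (3 * k)"
    and I_def: "I \<in> D l"
    and le_def: "{xs @ ys | xs ys. xs \<in> I \<and> ys \<in> I \<and> le xs ys} \<in> D (2 * l)"
    and le_refl: "\<forall>x\<in>I. le x x"
    and le_antisym: "\<forall>x\<in>I. \<forall>y\<in>I. le x y \<longrightarrow> le y x \<longrightarrow> x = y"
    and le_trans: "\<forall>x\<in>I. \<forall>y\<in>I. \<forall>z\<in>I. le x y \<longrightarrow> le y z \<longrightarrow> le x z"
    and le_total: "\<forall>x\<in>I. \<forall>y\<in>I. le x y \<or> le y x"
    and v_into: "v ` carrier Gr \<subseteq> I"
    and v_def: "{xs @ v xs | xs. xs \<in> carrier Gr} \<in> D (k + l)"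
    and v_add: "\<forall>a\<in>carrier Gr. \<forall>b\<in>carrier Gr.
                  le (v a) (v (a \<otimes>\<^bsub>Gr\<^esub> b)) \<or> le (v b) (v (a \<otimes>\<^bsub>Gr\<^esub> b))"
    and v_neg: "\<forall>a\<in>carrier Gr. v (inv\<^bsub>Gr\<^esub> a) = v a"
    and v_zero_max: "\<forall>r\<in>I. le r (v \<one>\<^bsub>Gr\<^esub>)"
    and v_zero_only: "\<forall>a\<in>carrier Gr. v a = v \<one>\<^bsub>Gr\<^esub> \<longrightarrow> a = \<one>\<^bsub>Gr\<^esub>"
    and boolean: "\<forall>X\<in>D k. X \<subseteq> carrier Gr \<longrightarrow>
        X \<in> boolcomb (carrier Gr)
          {(\<lambda>x. a \<otimes>\<^bsub>Gr\<^esub> x) ` Y | a Y. a \<in> carrier Gr \<and>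
             (Y \<in> B ` I \<or> Y \<in> Bm ` I \<or> Y = {\<one>\<^bsub>Gr\<^esub>} \<or> Y = carrier Gr)}"
    and quot_infinite: "\<forall>r\<in>I. le r (v \<one>\<^bsub>Gr\<^esub>) \<and> r \<noteq> v \<one>\<^bsub>Gr\<^esub> \<longrightarrow>
        infinite (cosets_in Gr (B r) (Bm r))"
begin

sublocale G: comm_group Gr by (rule grp)

lemma car_tuples: "carrier Gr \<subseteq> tuples k" using ds_sub[OF struct G_def] .
lemma I_tuples: "I \<subseteq> tuples l" using ds_sub[OF struct I_def] .
lemma vI: "a \<in> carrier Gr \<Longrightarrow> v a \<in> I" using v_into by blast
lemma one_I: "v \<one> \<in> I" using vI by simp

lemma mem_B: "a \<in> B r \<longleftrightarrow> a \<in> carrier Gr \<and> le r (v a)" by (simp add: B_def)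
lemma mem_Bm: "a \<in> Bm r \<longleftrightarrow> a \<in> carrier Gr \<and> le r (v a) \<and> r \<noteq> v a" by (simp add: Bm_def)

lemma lt_trans1: "r \<in> I \<Longrightarrow> s \<in> I \<Longrightarrow> t \<in> I \<Longrightarrow> le r s \<Longrightarrow> le s t \<Longrightarrow> s \<noteq> t \<Longrightarrow> r \<noteq> t"
  using le_antisym by blast
lemma lt_trans2: "r \<in> I \<Longrightarrow> s \<in> I \<Longrightarrow> t \<in> I \<Longrightarrow> le r s \<Longrightarrow> r \<noteq> s \<Longrightarrow> le s t \<Longrightarrow> r \<noteq> t"
  using le_antisym by blast
lemma letr: "r \<in> I \<Longrightarrow> s \<in> I \<Longrightarrow> t \<in> I \<Longrightarrow> le r s \<Longrightarrow> le s t \<Longrightarrow> le r t"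
  using le_trans by blast

lemma B_sub: assumes r: "r \<in> I" shows "subgroup (B r) Gr"
proof (rule G.subgroupI)
  show "B r \<subseteq> carrier Gr" by (auto simp: mem_B)
  have "\<one> \<in> B r" using v_zero_max r by (simp add: mem_B)
  thus "B r \<noteq> {}" by blast
next
  fix a assume "a \<in> B r" thus "inv a \<in> B r" using v_neg by (auto simp: mem_B)
next
  fix a b assume a: "a \<in> B r" and b: "b \<in> B r"
  have ac: "a \<in> carrier Gr" and bc: "b \<in> carrier Gr" using a b by (auto simp: mem_B)
  have abc: "a \<otimes> b \<in> carrier Gr" using ac bc by simp
  from v_add ac bc have "le (v a) (v (a \<otimes> b)) \<or> le (v b) (v (a \<otimes> b))" by blast
  thus "a \<otimes> b \<in> B r"
  proof
    assume "le (v a) (v (a \<otimes> b))"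
    thus ?thesis using letr[OF r vI[OF ac] vI[OF abc]] a abc by (auto simp: mem_B)
  next
    assume "le (v b) (v (a \<otimes> b))"
    thus ?thesis using letr[OF r vI[OF bc] vI[OF abc]] b abc by (auto simp: mem_B)
  qed
qed

lemma Bm_sub: assumes r: "r \<in> I" "r \<noteq> v \<one>" shows "subgroup (Bm r) Gr"
proof (rule G.subgroupI)
  show "Bm r \<subseteq> carrier Gr" by (auto simp: mem_Bm)
  have "\<one> \<in> Bm r" using v_zero_max r by (simp add: mem_Bm)
  thus "Bm r \<noteq> {}" by blast
next
  fix a assume "a \<in> Bm r" thus "inv a \<in> Bm r" using v_neg by (auto simp: mem_Bm)
next
  fix a b assume a: "a \<in> Bm r" and b: "b \<in> Bm r"
  have ac: "a \<in> carrier Gr" and bc: "b \<in> carrier Gr" using a b by (auto simp: mem_Bm)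
  have abc: "a \<otimes> b \<in> carrier Gr" using ac bc by simp
  from v_add ac bc have "le (v a) (v (a \<otimes> b)) \<or> le (v b) (v (a \<otimes> b))" by blast
  thus "a \<otimes> b \<in> Bm r"
  proof
    assume "le (v a) (v (a \<otimes> b))"
    thus ?thesis using letr[OF r(1) vI[OF ac] vI[OF abc]] lt_trans2[OF r(1) vI[OF ac] vI[OF abc]] a abc
      by (auto simp: mem_Bm)
  next
    assume "le (v b) (v (a \<otimes> b))"
    thus ?thesis using letr[OF r(1) vI[OF bc] vI[OF abc]] lt_trans2[OF r(1) vI[OF bc] vI[OF abc]] b abc
      by (auto simp: mem_Bm)
  qed
qed

lemma B_one: "B (v \<one>) = {\<one>}"
proof (intro equalityI subsetI)
  fix a assume "a \<in> B (v \<one>)"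
  hence a: "a \<in> carrier Gr" "le (v \<one>) (v a)" by (auto simp: mem_B)
  have "le (v a) (v \<one>)" using v_zero_max vI[OF a(1)] by blast
  hence "v a = v \<one>" using le_antisym vI[OF a(1)] one_I a(2) by blast
  thus "a \<in> {\<one>}" using v_zero_only a(1) by blast
next
  fix a assume "a \<in> {\<one>}" thus "a \<in> B (v \<one>)" using le_refl one_I by (auto simp: mem_B)
qed

definition Bs where "Bs = B ` I \<union> Bm ` (I - {v \<one>}) \<union> {{\<one>}, carrier Gr}"

lemma Bs_cases:
  assumes "\<beta> \<in> Bs"
  obtains (B) r where "r \<in> I" "\<beta> = B r" | (Bm) r where "r \<in> I" "r \<noteq> v \<one>" "\<beta> = Bm r"
    | (one) "\<beta> = {\<one>}" | (car) "\<beta> = carrier Gr"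
proof -
  have "\<beta> \<in> B ` I \<or> \<beta> \<in> Bm ` (I - {v \<one>}) \<or> \<beta> = {\<one>} \<or> \<beta> = carrier Gr"
    using assms unfolding Bs_def by blast
  thus ?thesis
  proof (elim disjE)
    assume "\<beta> \<in> B ` I"
    then obtain r where "r \<in> I" "\<beta> = B r" by (rule imageE) simp
    thus ?thesis by (rule that(1))
  next
    assume "\<beta> \<in> Bm ` (I - {v \<one>})"
    then obtain r where "r \<in> I - {v \<one>}" "\<beta> = Bm r" by (rule imageE) simp
    hence "r \<in> I" "r \<noteq> v \<one>" "\<beta> = Bm r" by simp_all
    thus ?thesis by (rule that(2))
  next
    assume "\<beta> = {\<one>}" thus ?thesis by (rule that(3))
  next
    assume "\<beta> = carrier Gr" thus ?thesis by (rule that(4))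
  qed
qed

lemma Bs_subgroup: assumes "\<beta> \<in> Bs" shows "subgroup \<beta> Gr"
  using assms
proof (cases rule: Bs_cases)
  case (B r) thus ?thesis using B_sub by simp
next
  case (Bm r) thus ?thesis using Bm_sub by simp
next
  case one thus ?thesis using G.triv_subgroup by simp
next
  case car thus ?thesis using G.subgroup_self by simp
qed

end



context setting begin

lemma sub_car: "\<beta> \<in> Bs \<Longrightarrow> \<beta> \<subseteq> carrier Gr"
  using subgroup.subset[OF Bs_subgroup] .

lemma one_in: "\<beta> \<in> Bs \<Longrightarrow> \<one> \<in> \<beta>"
  using subgroup.one_closed[OF Bs_subgroup] .

lemma chain_BB: "r \<in> I \<Longrightarrow> s \<in> I \<Longrightarrow> B r \<subseteq> B s \<or> B s \<subseteq> B r"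
proof -
  assume r: "r \<in> I" and s: "s \<in> I"
  have "le r s \<or> le s r" using le_total r s by blast
  thus ?thesis
  proof
    assume "le r s" 
    hence "B s \<subseteq> B r" using letr[OF r s vI] by (auto simp: mem_B)
    thus ?thesis by blast
  next
    assume "le s r"
    hence "B r \<subseteq> B s" using letr[OF s r vI] by (auto simp: mem_B)
    thus ?thesis by blast
  qed
qed

lemma chain_BmBm: "r \<in> I \<Longrightarrow> s \<in> I \<Longrightarrow> Bm r \<subseteq> Bm s \<or> Bm s \<subseteq> Bm r"
proof -
  have *: "Bm s \<subseteq> Bm r" if r: "r \<in> I" and s: "s \<in> I" and rs: "le r s" for r s
  proof
    fix a assume a: "a \<in> Bm s"
    hence ac: "a \<in> carrier Gr" "le s (v a)" "s \<noteq> v a" by (auto simp: mem_Bm)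
    have "le r (v a)" using letr[OF r s vI[OF ac(1)] rs ac(2)] .
    moreover have "r \<noteq> v a"
    proof
      assume "r = v a"
      hence "le s r" using ac by simp
      hence "r = s" using le_antisym r s rs by blast
      thus False using ac \<open>r = v a\<close> by simp
    qed
    ultimately show "a \<in> Bm r" using ac by (simp add: mem_Bm)
  qed
  assume r: "r \<in> I" and s: "s \<in> I"
  have "le r s \<or> le s r" using le_total r s by blast
  thus ?thesis using *[OF r s] *[OF s r] by blast
qed

lemma chain_BBm: "r \<in> I \<Longrightarrow> s \<in> I \<Longrightarrow> B r \<subseteq> Bm s \<or> Bm s \<subseteq> B r"
proof -
  assume r: "r \<in> I" and s: "s \<in> I"
  show ?thesis
  proof (cases "le s r \<and> s \<noteq> r")
    case True
    have "B r \<subseteq> Bm s"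
    proof
      fix a assume "a \<in> B r"
      hence ac: "a \<in> carrier Gr" "le r (v a)" by (auto simp: mem_B)
      have "le s (v a)" using letr[OF s r vI[OF ac(1)]] True ac by blast
      moreover have "s \<noteq> v a"
      proof
        assume "s = v a"
        hence "le r s" using ac by simp
        thus False using True le_antisym r s by blast
      qed
      ultimately show "a \<in> Bm s" using ac by (simp add: mem_Bm)
    qed
    thus ?thesis by blast
  next
    case False
    hence "le r s"
    proof (cases "le s r")
      case True
      hence "s = r" using False by blast
      thus ?thesis using le_refl r by simp
    next
      case False
      thus ?thesis using le_total r s by blast
    qed
    hence "Bm s \<subseteq> B r" using letr[OF r s vI] by (auto simp: mem_B mem_Bm)
    thus ?thesis by blast
  qed
qed

lemma Bs_chain': assumes "\<beta> \<in> Bs" "\<gamma> \<in> Bs" shows "\<beta> \<subseteq> \<gamma> \<or> \<gamma> \<subseteq> \<beta>"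
proof -
  have one: "{\<one>} \<subseteq> \<delta>" if "\<delta> \<in> Bs" for \<delta> using one_in[OF that] by blast
  have car: "\<delta> \<subseteq> carrier Gr" if "\<delta> \<in> Bs" for \<delta> using sub_car[OF that] .
  show ?thesis using assms(1)
  proof (cases rule: Bs_cases)
    case (B r)
    show ?thesis using assms(2)
    proof (cases rule: Bs_cases)
      case (B s) thus ?thesis using chain_BB \<open>r \<in> I\<close> \<open>\<beta> = B r\<close> by blast
    next
      case (Bm s) thus ?thesis using chain_BBm \<open>r \<in> I\<close> \<open>\<beta> = B r\<close> by blast
    qed (use one car assms in blast)+
  next
    case (Bm r)
    show ?thesis using assms(2)
    proof (cases rule: Bs_cases)
      case (B s) thus ?thesis using chain_BBm \<open>r \<in> I\<close> \<open>\<beta> = Bm r\<close> by blast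
    next
      case (Bm s) thus ?thesis using chain_BmBm \<open>r \<in> I\<close> \<open>\<beta> = Bm r\<close> by blast
    qed (use one car assms in blast)+
  qed (use one car assms in blast)+
qed

lemma ball_contains:
  assumes "\<gamma> \<in> Bs" "g \<in> \<gamma>" "g \<noteq> \<one>" shows "B (v g) \<subseteq> \<gamma>"
  using assms(1)
proof (cases rule: Bs_cases)
  case (B s)
  have g: "g \<in> carrier Gr" "le s (v g)" using assms(2) B by (auto simp: mem_B)
  show ?thesis unfolding B(2)
  proof
    fix a assume "a \<in> B (v g)"
    hence a: "a \<in> carrier Gr" "le (v g) (v a)" by (auto simp: mem_B)
    thus "a \<in> B s" using letr[OF B(1) vI[OF g(1)] vI[OF a(1)] g(2) a(2)] by (simp add: mem_B)
  qed
next
  case (Bm s)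
  have g: "g \<in> carrier Gr" "le s (v g)" "s \<noteq> v g" using assms(2) Bm by (auto simp: mem_Bm)
  show ?thesis unfolding Bm(3)
  proof
    fix a assume "a \<in> B (v g)"
    hence a: "a \<in> carrier Gr" "le (v g) (v a)" by (auto simp: mem_B)
    have "s \<noteq> v a" using lt_trans2[OF Bm(1) vI[OF g(1)] vI[OF a(1)] g(2) g(3) a(2)] .
    thus "a \<in> Bm s" using letr[OF Bm(1) vI[OF g(1)] vI[OF a(1)] g(2) a(2)] a by (simp add: mem_Bm)
  qed
next
  case one thus ?thesis using assms by simp
next
  case car thus ?thesis by (auto simp: mem_B)
qed

lemma ball_misses:
  assumes "\<beta> \<in> Bs" "g \<in> carrier Gr" "g \<notin> \<beta>" shows "\<beta> \<subseteq> Bm (v g)"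
  using assms(1)
proof (cases rule: Bs_cases)
  case (B t)
  have "\<not> le t (v g)" using assms B by (simp add: mem_B)
  hence lt: "le (v g) t" "v g \<noteq> t" using le_total le_refl B(1) vI[OF assms(2)] by blast+
  show ?thesis unfolding B(2)
  proof
    fix a assume "a \<in> B t"
    hence a: "a \<in> carrier Gr" "le t (v a)" by (auto simp: mem_B)
    have "v g \<noteq> v a" using lt_trans2[OF vI[OF assms(2)] B(1) vI[OF a(1)] lt a(2)] .
    thus "a \<in> Bm (v g)" using letr[OF vI[OF assms(2)] B(1) vI[OF a(1)] lt(1) a(2)] a by (simp add: mem_Bm)
  qed
next
  case (Bm t)
  have "\<not> (le t (v g) \<and> t \<noteq> v g)" using assms Bm by (simp add: mem_Bm)
  hence lt: "le (v g) t" using le_total le_refl Bm(1) vI[OF assms(2)] by blast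
  show ?thesis unfolding Bm(3)
  proof
    fix a assume "a \<in> Bm t"
    hence a: "a \<in> carrier Gr" "le t (v a)" "t \<noteq> v a" by (auto simp: mem_Bm)
    have "v g \<noteq> v a"
    proof
      assume "v g = v a"
      hence "le t (v g)" using a by simp
      hence "t = v g" using le_antisym lt Bm(1) vI[OF assms(2)] by blast
      thus False using a \<open>v g = v a\<close> by simp
    qed
    thus "a \<in> Bm (v g)" using letr[OF vI[OF assms(2)] Bm(1) vI[OF a(1)] lt a(2)] a by (simp add: mem_Bm)
  qed
next
  case one
  have "g \<noteq> \<one>" using assms one by auto
  hence "v g \<noteq> v \<one>" using v_zero_only assms(2) by blast
  moreover have "le (v g) (v \<one>)" using v_zero_max vI[OF assms(2)] by blast
  ultimately show ?thesis using one by (simp add: mem_Bm)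
next
  case car thus ?thesis using assms by simp
qed

lemma Bs_inf':
  assumes b: "\<beta> \<in> Bs" and c: "\<gamma> \<in> Bs" and lt: "\<beta> \<subset> \<gamma>"
  shows "infinite {tr Gr a \<beta> | a. a \<in> \<gamma>}"
proof
  assume fin: "finite {tr Gr a \<beta> | a. a \<in> \<gamma>}"
  obtain g where g: "g \<in> \<gamma>" "g \<notin> \<beta>" using lt by blast
  have gc: "g \<in> carrier Gr" using g sub_car[OF c] by blast
  have g1: "g \<noteq> \<one>" using g one_in[OF b] by blast
  define r where "r = v g"
  have r: "r \<in> I" "le r (v \<one>)" "r \<noteq> v \<one>"
    using vI[OF gc] v_zero_max v_zero_only gc g1 by (auto simp: r_def)
  have Bg: "B r \<subseteq> \<gamma>" using ball_contains[OF c g(1) g1] by (simp add: r_def)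
  have bB: "\<beta> \<subseteq> Bm r" using ball_misses[OF b gc g(2)] by (simp add: r_def)
  have sBm: "subgroup (Bm r) Gr" using Bm_sub r by blast
  have sb: "subgroup \<beta> Gr" using Bs_subgroup[OF b] .
  define \<phi> where "\<phi> C = {x \<otimes> y | x y. x \<in> C \<and> y \<in> Bm r}" for C
  have phi: "\<phi> (tr Gr a \<beta>) = tr Gr a (Bm r)" if a: "a \<in> carrier Gr" for a
  proof (intro equalityI subsetI)
    fix z assume "z \<in> \<phi> (tr Gr a \<beta>)"
    then obtain b y where z: "b \<in> \<beta>" "y \<in> Bm r" "z = (a \<otimes> b) \<otimes> y"
      unfolding \<phi>_def tr_def by blast
    have bc: "b \<in> carrier Gr" "y \<in> carrier Gr" using z(1,2) bB sub_car[OF b] by (auto simp: mem_Bm)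
    have "b \<otimes> y \<in> Bm r" using subgroup.m_closed[OF sBm _ z(2)] z(1) bB by blast
    moreover have "z = a \<otimes> (b \<otimes> y)" using z(3) a bc by (simp add: G.m_assoc)
    ultimately show "z \<in> tr Gr a (Bm r)" unfolding tr_def by blast
  next
    fix z assume "z \<in> tr Gr a (Bm r)"
    then obtain y where y: "y \<in> Bm r" "z = a \<otimes> y" unfolding tr_def by blast
    have yc: "y \<in> carrier Gr" using y by (simp add: mem_Bm)
    have "a \<otimes> \<one> \<in> tr Gr a \<beta>" using one_in[OF b] unfolding tr_def by blast
    moreover have "z = (a \<otimes> \<one>) \<otimes> y" using y a yc by simp
    ultimately show "z \<in> \<phi> (tr Gr a \<beta>)" unfolding \<phi>_def using y(1) by blast
  qed
  have "{tr Gr a (Bm r) | a. a \<in> B r} \<subseteq> \<phi> ` {tr Gr a \<beta> | a. a \<in> \<gamma>}"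
  proof
    fix C assume "C \<in> {tr Gr a (Bm r) | a. a \<in> B r}"
    then obtain a where a: "a \<in> B r" "C = tr Gr a (Bm r)" by blast
    have ac: "a \<in> carrier Gr" using a by (simp add: mem_B)
    have "C = \<phi> (tr Gr a \<beta>)" using phi[OF ac] a by simp
    moreover have "tr Gr a \<beta> \<in> {tr Gr a \<beta> | a. a \<in> \<gamma>}" using a(1) Bg by blast
    ultimately show "C \<in> \<phi> ` {tr Gr a \<beta> | a. a \<in> \<gamma>}" by blast
  qed
  hence "finite {tr Gr a (Bm r) | a. a \<in> B r}"
    by (rule finite_subset[OF _ finite_imageI[OF fin]])
  moreover have "cosets_in Gr (B r) (Bm r) = {tr Gr a (Bm r) | a. a \<in> B r}"
    unfolding cosets_in_def tr_def ..
  ultimately show False using quot_infinite r by auto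
qed

sublocale C: core Gr Bs
  apply (rule core.intro[OF grp])
  apply (rule core_axioms.intro)
      apply (erule Bs_subgroup)
     apply (erule (1) Bs_chain')
    apply (erule (2) Bs_inf')
   apply (simp add: Bs_def)
  apply (simp add: Bs_def)
  done

end



lemma map_tev_Inl: "length w = n \<Longrightarrow> b \<le> n \<Longrightarrow> map (tev w) (map Inl [a..<b]) = take (b - a) (drop a w)"
  by (intro nth_equalityI) (auto simp: tev_def)

lemma map_tev_Inr: "map (tev w) (map Inr cs) = cs"
  by (induction cs) (auto simp: tev_def)

lemma map_tev_Inl': "length w = n \<Longrightarrow> b \<le> n \<Longrightarrow> map (tev w \<circ> Inl) [a..<b] = take (b - a) (drop a w)"
  using map_tev_Inl by (metis map_map)

lemma map_tev_Inr': "map (tev w \<circ> Inr) cs = cs"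
  using map_tev_Inr by (metis map_map)

context setting begin

lemma ds: "def_structure D" by (rule struct)

lemma mem_Vg: "length xs = k \<Longrightarrow> xs @ ys \<in> {xs @ v xs | xs. xs \<in> carrier Gr} \<longleftrightarrow> xs \<in> carrier Gr \<and> ys = v xs"
proof
  assume len: "length xs = k" and "xs @ ys \<in> {xs @ v xs | xs. xs \<in> carrier Gr}"
  then obtain a where a: "a \<in> carrier Gr" "xs @ ys = a @ v a" by blast
  have "length a = k" using a(1) car_tuples by blast
  hence "xs = a \<and> ys = v a" using a(2) len by simp
  thus "xs \<in> carrier Gr \<and> ys = v xs" using a by simp
qed blast

lemma mem_LE: "length r = l \<Longrightarrow> r @ ys \<in> {xs @ ys | xs ys. xs \<in> I \<and> ys \<in> I \<and> le xs ys} \<longleftrightarrow> r \<in> I \<and> ys \<in> I \<and> le r ys"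
proof
  assume len: "length r = l" and "r @ ys \<in> {xs @ ys | xs ys. xs \<in> I \<and> ys \<in> I \<and> le xs ys}"
  then obtain a b where a: "a \<in> I" "b \<in> I" "le a b" "r @ ys = a @ b" by blast
  have "length a = l" using a(1) I_tuples by blast
  hence "r = a \<and> ys = b" using a(4) len by simp
  thus "r \<in> I \<and> ys \<in> I \<and> le r ys" using a by simp
qed blast

lemma mem_M3: "length a = k \<Longrightarrow> length b = k \<Longrightarrow>
   a @ b @ z \<in> {xs @ ys @ (xs \<otimes> ys) | xs ys. xs \<in> carrier Gr \<and> ys \<in> carrier Gr}
   \<longleftrightarrow> a \<in> carrier Gr \<and> b \<in> carrier Gr \<and> z = a \<otimes> b"
proof
  assume len: "length a = k" "length b = k"
    and "a @ b @ z \<in> {xs @ ys @ (xs \<otimes> ys) | xs ys. xs \<in> carrier Gr \<and> ys \<in> carrier Gr}"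
  then obtain x y where xy: "x \<in> carrier Gr" "y \<in> carrier Gr" "a @ b @ z = x @ y @ (x \<otimes> y)" by blast
  have "length x = k" "length y = k" using xy car_tuples by blast+
  hence "a = x \<and> b = y \<and> z = x \<otimes> y" using xy(3) len by simp
  thus "a \<in> carrier Gr \<and> b \<in> carrier Gr \<and> z = a \<otimes> b" using xy by simp
qed blast

lemma B_D: assumes r: "r \<in> I" shows "B r \<in> D k"
proof -
  have lr: "length r = l" using r I_tuples by blast
  let ?ts = "map Inr r @ map Inl [k..<k+l]"
  have "dfn D (k + l) (\<lambda>zs. zs \<in> {xs @ v xs | xs. xs \<in> carrier Gr} \<and>
           map (tev zs) ?ts \<in> {xs @ ys | xs ys. xs \<in> I \<and> ys \<in> I \<and> le xs ys})"
    by (intro dfn_conj[OF ds] dfn_set[OF ds v_def] dfn_map[OF ds le_def]) (auto simp: lr)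
  from dfn_ex[OF ds this] have "dfn D k (\<lambda>xs. xs \<in> B r)"
  proof (rule dfn_cong[OF ds])
    fix xs :: "'m list" assume xs: "length xs = k"
    have m: "map (tev (xs @ ys)) ?ts = r @ ys" if "length ys = l" for ys
      using that xs by (simp add: map_tev_Inr' map_tev_Inl')
    show "(\<exists>ys. length ys = l \<and> xs @ ys \<in> {xs @ v xs | xs. xs \<in> carrier Gr} \<and>
            map (tev (xs @ ys)) ?ts \<in> {xs @ ys | xs ys. xs \<in> I \<and> ys \<in> I \<and> le xs ys}) = (xs \<in> B r)"
    proof
      assume "\<exists>ys. length ys = l \<and> xs @ ys \<in> {xs @ v xs | xs. xs \<in> carrier Gr} \<and>
            map (tev (xs @ ys)) ?ts \<in> {xs @ ys | xs ys. xs \<in> I \<and> ys \<in> I \<and> le xs ys}"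
      then obtain ys where ys: "length ys = l" "xs @ ys \<in> {xs @ v xs | xs. xs \<in> carrier Gr}"
        "map (tev (xs @ ys)) ?ts \<in> {xs @ ys | xs ys. xs \<in> I \<and> ys \<in> I \<and> le xs ys}" by blast
      have "xs \<in> carrier Gr" "ys = v xs" using ys(2) mem_Vg[OF xs] by auto
      moreover have "le r ys" using ys(3) m[OF ys(1)] mem_LE[OF lr] by auto
      ultimately show "xs \<in> B r" by (simp add: mem_B)
    next
      assume "xs \<in> B r"
      hence a: "xs \<in> carrier Gr" "le r (v xs)" by (auto simp: mem_B)
      have lv: "length (v xs) = l" using vI[OF a(1)] I_tuples by blast
      show "\<exists>ys. length ys = l \<and> xs @ ys \<in> {xs @ v xs | xs. xs \<in> carrier Gr} \<and>
            map (tev (xs @ ys)) ?ts \<in> {xs @ ys | xs ys. xs \<in> I \<and> ys \<in> I \<and> le xs ys}"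
        using a lv m[OF lv] mem_LE[OF lr] r vI[OF a(1)] by (intro exI[of _ "v xs"]) auto
    qed
  qed
  hence "{xs \<in> tuples k. xs \<in> B r} \<in> D k" by (rule dfn_D[OF ds])
  moreover have "{xs \<in> tuples k. xs \<in> B r} = B r" using car_tuples by (auto simp: mem_B)
  ultimately show ?thesis by simp
qed

lemma Bm_D: assumes r: "r \<in> I" shows "Bm r \<in> D k"
proof -
  have lr: "length r = l" using r I_tuples by blast
  let ?ts = "map Inr r @ map Inl [k..<k+l]"
  let ?ts2 = "map Inl [k..<k+l] @ map Inr r"
  let ?LE = "{xs @ ys | xs ys. xs \<in> I \<and> ys \<in> I \<and> le xs ys}"
  have "dfn D (k + l) (\<lambda>zs. zs \<in> {xs @ v xs | xs. xs \<in> carrier Gr} \<and>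
           map (tev zs) ?ts \<in> ?LE \<and> \<not> map (tev zs) ?ts2 \<in> ?LE)"
    by (intro dfn_conj[OF ds] dfn_not[OF ds] dfn_set[OF ds v_def] dfn_map[OF ds le_def]) (auto simp: lr)
  from dfn_ex[OF ds this] have "dfn D k (\<lambda>xs. xs \<in> Bm r)"
  proof (rule dfn_cong[OF ds])
    fix xs :: "'m list" assume xs: "length xs = k"
    have m: "map (tev (xs @ ys)) ?ts = r @ ys" "map (tev (xs @ ys)) ?ts2 = ys @ r" if "length ys = l" for ys
      using that xs by (simp_all add: map_tev_Inr' map_tev_Inl')
    show "(\<exists>ys. length ys = l \<and> xs @ ys \<in> {xs @ v xs | xs. xs \<in> carrier Gr} \<and>
            map (tev (xs @ ys)) ?ts \<in> ?LE \<and> \<not> map (tev (xs @ ys)) ?ts2 \<in> ?LE) = (xs \<in> Bm r)"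
    proof
      assume "\<exists>ys. length ys = l \<and> xs @ ys \<in> {xs @ v xs | xs. xs \<in> carrier Gr} \<and>
            map (tev (xs @ ys)) ?ts \<in> ?LE \<and> \<not> map (tev (xs @ ys)) ?ts2 \<in> ?LE"
      then obtain ys where ys: "length ys = l" "xs @ ys \<in> {xs @ v xs | xs. xs \<in> carrier Gr}"
        "map (tev (xs @ ys)) ?ts \<in> ?LE" "\<not> map (tev (xs @ ys)) ?ts2 \<in> ?LE" by blast
      have a: "xs \<in> carrier Gr" "ys = v xs" using ys(2) mem_Vg[OF xs] by auto
      have vi: "v xs \<in> I" using vI[OF a(1)] .
      have "le r ys" using ys(3) m(1)[OF ys(1)] mem_LE[OF lr] by auto
      moreover have "\<not> le ys r" using ys(4) m(2)[OF ys(1)] mem_LE[OF ys(1)] r a vi by auto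
      ultimately show "xs \<in> Bm r" using a le_refl r by (auto simp: mem_Bm)
    next
      assume "xs \<in> Bm r"
      hence a: "xs \<in> carrier Gr" "le r (v xs)" "r \<noteq> v xs" by (auto simp: mem_Bm)
      have vi: "v xs \<in> I" using vI[OF a(1)] .
      have lv: "length (v xs) = l" using vI[OF a(1)] I_tuples by blast
      have "\<not> le (v xs) r" using a le_antisym r vi by blast
      thus "\<exists>ys. length ys = l \<and> xs @ ys \<in> {xs @ v xs | xs. xs \<in> carrier Gr} \<and>
            map (tev (xs @ ys)) ?ts \<in> ?LE \<and> \<not> map (tev (xs @ ys)) ?ts2 \<in> ?LE"
        using a lv m[OF lv] mem_LE[OF lr] mem_LE[OF lv] r vi by (intro exI[of _ "v xs"]) auto
    qed
  qed
  hence "{xs \<in> tuples k. xs \<in> Bm r} \<in> D k" by (rule dfn_D[OF ds])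
  moreover have "{xs \<in> tuples k. xs \<in> Bm r} = Bm r" using car_tuples by (auto simp: mem_Bm)
  ultimately show ?thesis by simp
qed

lemma tr_mem_gen: "A \<subseteq> carrier Gr \<Longrightarrow> c \<in> carrier Gr \<Longrightarrow> x \<in> tr Gr c A \<longleftrightarrow> x \<in> carrier Gr \<and> inv c \<otimes> x \<in> A"
proof
  assume A: "A \<subseteq> carrier Gr" and c: "c \<in> carrier Gr" and "x \<in> tr Gr c A"
  then obtain a where a: "a \<in> A" "x = c \<otimes> a" unfolding tr_def by blast
  have ac: "a \<in> carrier Gr" using a A by blast
  have "inv c \<otimes> x = a" using a c ac by (simp add: G.m_assoc[symmetric])
  thus "x \<in> carrier Gr \<and> inv c \<otimes> x \<in> A" using a c ac by simp
next
  assume A: "A \<subseteq> carrier Gr" and c: "c \<in> carrier Gr" and x: "x \<in> carrier Gr \<and> inv c \<otimes> x \<in> A"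
  have "x = c \<otimes> (inv c \<otimes> x)" using G.id7 c x by blast
  thus "x \<in> tr Gr c A" using x unfolding tr_def by blast
qed

lemma tr_D: assumes A: "A \<in> D k" "A \<subseteq> carrier Gr" and c: "c \<in> carrier Gr" shows "tr Gr c A \<in> D k"
proof -
  have ic: "inv c \<in> carrier Gr" using c by simp
  have lic: "length (inv c) = k" using ic car_tuples by blast
  let ?M3 = "{xs @ ys @ (xs \<otimes> ys) | xs ys. xs \<in> carrier Gr \<and> ys \<in> carrier Gr}"
  let ?ts = "map Inr (inv c) @ map Inl [0..<k+k]"
  let ?ts2 = "map Inl [k..<k+k]"
  have "dfn D (k + k) (\<lambda>zs. map (tev zs) ?ts \<in> ?M3 \<and> map (tev zs) ?ts2 \<in> A)"
    by (intro dfn_conj[OF ds] dfn_map[OF ds mult_def] dfn_map[OF ds A(1)]) (auto simp: lic)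
  from dfn_ex[OF ds this] have "dfn D k (\<lambda>xs. xs \<in> tr Gr c A)"
  proof (rule dfn_cong[OF ds])
    fix xs :: "'m list" assume xs: "length xs = k"
    have m: "map (tev (xs @ ys)) ?ts = inv c @ xs @ ys" "map (tev (xs @ ys)) ?ts2 = ys" if "length ys = k" for ys
      using that xs by (simp_all add: map_tev_Inr' map_tev_Inl')
    show "(\<exists>ys. length ys = k \<and> map (tev (xs @ ys)) ?ts \<in> ?M3 \<and> map (tev (xs @ ys)) ?ts2 \<in> A) = (xs \<in> tr Gr c A)"
    proof
      assume "\<exists>ys. length ys = k \<and> map (tev (xs @ ys)) ?ts \<in> ?M3 \<and> map (tev (xs @ ys)) ?ts2 \<in> A"
      then obtain ys where ys: "length ys = k" "map (tev (xs @ ys)) ?ts \<in> ?M3" "map (tev (xs @ ys)) ?ts2 \<in> A"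
        by blast
      have "xs \<in> carrier Gr" "ys = inv c \<otimes> xs" using ys(2) m(1)[OF ys(1)] mem_M3[OF lic xs] by auto
      thus "xs \<in> tr Gr c A" using ys(3) m(2)[OF ys(1)] tr_mem_gen[OF A(2) c] by simp
    next
      assume "xs \<in> tr Gr c A"
      hence a: "xs \<in> carrier Gr" "inv c \<otimes> xs \<in> A" using tr_mem_gen[OF A(2) c] by auto
      have l2: "length (inv c \<otimes> xs) = k" using a car_tuples ic by auto
      show "\<exists>ys. length ys = k \<and> map (tev (xs @ ys)) ?ts \<in> ?M3 \<and> map (tev (xs @ ys)) ?ts2 \<in> A"
        using a l2 m[OF l2] mem_M3[OF lic xs] ic by (intro exI[of _ "inv c \<otimes> xs"]) auto
    qed
  qed
  hence "{xs \<in> tuples k. xs \<in> tr Gr c A} \<in> D k" by (rule dfn_D[OF ds])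
  moreover have "{xs \<in> tuples k. xs \<in> tr Gr c A} = tr Gr c A"
    using car_tuples tr_mem_gen[OF A(2) c] by auto
  ultimately show ?thesis by simp
qed

lemma Bs_D: assumes "\<beta> \<in> Bs" shows "\<beta> \<in> D k"
  using assms
proof (cases rule: Bs_cases)
  case (B r) thus ?thesis using B_D by simp
next
  case (Bm r) thus ?thesis using Bm_D by simp
next
  case one thus ?thesis using B_D[OF one_I] B_one by simp
next
  case car thus ?thesis using G_def by simp
qed

end



context setting begin

lemma Bm_top: "Bm (v \<one>) = {}"
proof -
  have "a \<notin> Bm (v \<one>)" for a
  proof
    assume "a \<in> Bm (v \<one>)"
    hence a: "a \<in> carrier Gr" "le (v \<one>) (v a)" "v \<one> \<noteq> v a" by (auto simp: mem_Bm)
    have "le (v a) (v \<one>)" using v_zero_max vI[OF a(1)] by blast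
    thus False using a le_antisym vI[OF a(1)] one_I by blast
  qed
  thus ?thesis by blast
qed

definition Bas where "Bas = {(\<lambda>x. a \<otimes> x) ` Y | a Y. a \<in> carrier Gr \<and>
             (Y \<in> B ` I \<or> Y \<in> Bm ` I \<or> Y = {\<one>} \<or> Y = carrier Gr)}"

definition detd where "detd S Y \<longleftrightarrow> finite S \<and> S \<subseteq> carrier Gr \<times> Bs \<and>
   (\<forall>x\<in>carrier Gr. \<forall>y\<in>carrier Gr. (\<forall>p\<in>S. x \<in> tr Gr (fst p) (snd p) \<longleftrightarrow> y \<in> tr Gr (fst p) (snd p))
        \<longrightarrow> (x \<in> Y \<longleftrightarrow> y \<in> Y))"

lemma determ: "Y \<in> boolcomb (carrier Gr) Bas \<Longrightarrow> \<exists>S. detd S Y"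
proof (induction rule: boolcomb.induct)
  case (gen A)
  from gen have "\<exists>a Y. A = (\<lambda>x. a \<otimes> x) ` Y \<and> a \<in> carrier Gr \<and>
             (Y \<in> B ` I \<or> Y \<in> Bm ` I \<or> Y = {\<one>} \<or> Y = carrier Gr)"
    unfolding Bas_def mem_Collect_eq .
  then obtain a Y0 where a: "A = (\<lambda>x. a \<otimes> x) ` Y0" "a \<in> carrier Gr"
    and Y0: "Y0 \<in> B ` I \<or> Y0 \<in> Bm ` I \<or> Y0 = {\<one>} \<or> Y0 = carrier Gr"
    by (elim exE conjE)
  have Atr: "A = tr Gr a Y0" using a(1) unfolding tr_def .
  show ?case
  proof (cases "Y0 = {}")
    case True
    hence "A = {}" using Atr by (simp add: tr_def)
    hence "detd {} A" by (simp add: detd_def)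
    thus ?thesis by blast
  next
    case False
    have "Y0 \<in> Bs" using Y0
    proof (elim disjE)
      assume "Y0 \<in> B ` I" thus "Y0 \<in> Bs" unfolding Bs_def by (rule UnI1[OF UnI1])
    next
      assume "Y0 \<in> Bm ` I"
      then obtain r where r: "r \<in> I" "Y0 = Bm r" by (rule imageE) simp
      have "r \<noteq> v \<one>" using r False Bm_top by auto
      hence "r \<in> I - {v \<one>}" using r by simp
      hence "Y0 \<in> Bm ` (I - {v \<one>})" using r(2) by (rule rev_image_eqI)
      thus "Y0 \<in> Bs" unfolding Bs_def by (rule UnI1[OF UnI2])
    next
      assume "Y0 = {\<one>}" thus "Y0 \<in> Bs" unfolding Bs_def by simp
    next
      assume "Y0 = carrier Gr" thus "Y0 \<in> Bs" unfolding Bs_def by simp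
    qed
    have "detd {(a, Y0)} A" unfolding detd_def
    proof (intro conjI ballI impI)
      show "finite {(a, Y0)}" by simp
      show "{(a, Y0)} \<subseteq> carrier Gr \<times> Bs" using a(2) \<open>Y0 \<in> Bs\<close> by simp
      fix x y assume "\<forall>p\<in>{(a, Y0)}. x \<in> tr Gr (fst p) (snd p) \<longleftrightarrow> y \<in> tr Gr (fst p) (snd p)"
      thus "x \<in> A \<longleftrightarrow> y \<in> A" using Atr by simp
    qed
    thus ?thesis by blast
  qed
next
  case (compl A)
  then obtain S where S: "detd S A" by blast
  have "detd S (carrier Gr - A)" unfolding detd_def
  proof (intro conjI ballI impI)
    show "finite S" "S \<subseteq> carrier Gr \<times> Bs" using S unfolding detd_def by auto
    fix x y assume xy: "x \<in> carrier Gr" "y \<in> carrier Gr"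
      and ag: "\<forall>p\<in>S. x \<in> tr Gr (fst p) (snd p) \<longleftrightarrow> y \<in> tr Gr (fst p) (snd p)"
    have "x \<in> A \<longleftrightarrow> y \<in> A" using S xy ag unfolding detd_def by blast
    thus "x \<in> carrier Gr - A \<longleftrightarrow> y \<in> carrier Gr - A" using xy by blast
  qed
  thus ?case by blast
next
  case (union A1 A2)
  then obtain S1 S2 where S1: "detd S1 A1" and S2: "detd S2 A2" by blast
  note D1 = S1[unfolded detd_def] and D2 = S2[unfolded detd_def]
  have d: "finite S1" "S1 \<subseteq> carrier Gr \<times> Bs" "finite S2" "S2 \<subseteq> carrier Gr \<times> Bs"
    "\<forall>x\<in>carrier Gr. \<forall>y\<in>carrier Gr. (\<forall>p\<in>S1. x \<in> tr Gr (fst p) (snd p) \<longleftrightarrow> y \<in> tr Gr (fst p) (snd p))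
        \<longrightarrow> (x \<in> A1 \<longleftrightarrow> y \<in> A1)"
    "\<forall>x\<in>carrier Gr. \<forall>y\<in>carrier Gr. (\<forall>p\<in>S2. x \<in> tr Gr (fst p) (snd p) \<longleftrightarrow> y \<in> tr Gr (fst p) (snd p))
        \<longrightarrow> (x \<in> A2 \<longleftrightarrow> y \<in> A2)"
    by (insert D1 D2, elim conjE, assumption)+
  have "detd (S1 \<union> S2) (A1 \<union> A2)" unfolding detd_def
  proof (intro conjI ballI impI)
    show "finite (S1 \<union> S2)" "S1 \<union> S2 \<subseteq> carrier Gr \<times> Bs" using d by auto
    fix x y assume xy: "x \<in> carrier Gr" "y \<in> carrier Gr"
      and ag: "\<forall>p\<in>S1 \<union> S2. x \<in> tr Gr (fst p) (snd p) \<longleftrightarrow> y \<in> tr Gr (fst p) (snd p)"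
    have "x \<in> A1 \<longleftrightarrow> y \<in> A1" using d(5) xy ag by blast
    moreover have "x \<in> A2 \<longleftrightarrow> y \<in> A2" using d(6) xy ag by blast
    ultimately show "x \<in> A1 \<union> A2 \<longleftrightarrow> y \<in> A1 \<union> A2" by blast
  qed
  thus ?case by blast
qed

lemma detd_core:
  assumes "detd S Y" "subgroup H Gr" "H \<subseteq> Y"
  shows "\<exists>\<beta>\<in>Bs. \<exists>H0. finite H0 \<and> H0 \<subseteq> H \<and> H \<subseteq> (\<Union>h\<in>H0. tr Gr h \<beta>) \<and>
            (\<forall>g\<in>\<beta>. \<exists>y1\<in>Y. \<exists>y2\<in>Y. g = y1 \<otimes> y2)"
proof (rule C.core_thm[OF assms(2)])
  show "finite S" "S \<subseteq> carrier Gr \<times> Bs" using assms(1) unfolding detd_def by auto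
  show "H \<subseteq> Y" by (rule assms(3))
  fix x y assume "x \<in> carrier Gr" "y \<in> carrier Gr"
    "\<forall>p\<in>S. (x \<in> tr Gr (fst p) (snd p)) = (y \<in> tr Gr (fst p) (snd p))"
  thus "(x \<in> Y) = (y \<in> Y)" using assms(1) unfolding detd_def by blast
qed

lemma boolean_Bas: assumes "X \<in> D k" "X \<subseteq> carrier Gr" shows "X \<in> boolcomb (carrier Gr) Bas"
  unfolding Bas_def using bspec[OF boolean assms(1)] assms(2) by (rule mp)

lemma K_inf: "infinite K"
proof
  assume "finite K"
  hence "K \<lesssim> (UNIV :: nat set)" by (rule finite_lepoll_infinite[OF infinite_UNIV_nat])
  thus False using uncountable by blast
qed

lemma small_insert_image: "F \<prec> K \<Longrightarrow> insert R (f ` F) \<prec> K"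
proof (cases "finite (f ` F)")
  case True
  hence "finite (insert R (f ` F))" by simp
  thus ?thesis by (rule finite_lesspoll_infinite[OF K_inf])
next
  case False
  assume F: "F \<prec> K"
  have "insert R (f ` F) \<approx> f ` F" using infinite_insert_eqpoll[OF False] .
  also have "f ` F \<lesssim> F" by (rule image_lepoll)
  finally show ?thesis using F by (rule lesspoll_trans1)
qed

lemma compact:
  assumes F: "F \<subseteq> D k" "F \<prec> K" and H: "H = tuples k \<inter> \<Inter>F" "H \<subseteq> carrier Gr"
    and X: "X \<in> D k" and prod: "\<forall>a\<in>H. \<forall>b\<in>H. a \<otimes> b \<in> X"
  shows "\<exists>F0. finite F0 \<and> F0 \<subseteq> F \<and> (\<forall>a\<in>carrier Gr \<inter> \<Inter>F0. \<forall>b\<in>carrier Gr \<inter> \<Inter>F0. a \<otimes> b \<in> X)"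
proof -
  let ?M3 = "{xs @ ys @ (xs \<otimes> ys) | xs ys. xs \<in> carrier Gr \<and> ys \<in> carrier Gr}"
  define R where "R = {w \<in> tuples (k + k). \<exists>z. length z = k \<and> w @ z \<in> ?M3 \<and> z \<notin> X}"
  define ps where "ps Z = {w \<in> tuples (k + k). take k w \<in> Z \<and> drop k w \<in> Z}" for Z :: "'m list set"
  have M3': "?M3 \<in> D (k + k + k)" using mult_def by (simp add: numeral_3_eq_3 add.assoc)
  have d0: "dfn D (k + k + k) (\<lambda>u. u \<in> ?M3 \<and> \<not> map (tev u) (map Inl [k+k..<k+k+k]) \<in> X)"
    by (intro dfn_conj[OF ds] dfn_not[OF ds] dfn_set[OF ds M3'] dfn_map[OF ds X]) auto
  have d1: "dfn D (k + k) (\<lambda>w. \<exists>z. length z = k \<and> w @ z \<in> ?M3 \<and> \<not> map (tev (w @ z)) (map Inl [k+k..<k+k+k]) \<in> X)"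
    by (rule dfn_ex[OF ds d0])
  have iff: "(\<exists>z. length z = k \<and> w @ z \<in> ?M3 \<and> \<not> map (tev (w @ z)) (map Inl [k+k..<k+k+k]) \<in> X)
        = (\<exists>z. length z = k \<and> w @ z \<in> ?M3 \<and> z \<notin> X)" if lw: "length w = k + k" for w
  proof -
    have e: "map (tev (w @ z)) (map Inl [k+k..<k+k+k]) = z" if "length z = k" for z
      using lw that by (subst map_tev_Inl[where n="k+k+k"]) auto
    show ?thesis
    proof
      assume "\<exists>z. length z = k \<and> w @ z \<in> ?M3 \<and> \<not> map (tev (w @ z)) (map Inl [k+k..<k+k+k]) \<in> X"
      then obtain z where z: "length z = k" "w @ z \<in> ?M3" "\<not> map (tev (w @ z)) (map Inl [k+k..<k+k+k]) \<in> X"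
        by blast
      show "\<exists>z. length z = k \<and> w @ z \<in> ?M3 \<and> z \<notin> X" using z e[OF z(1)] by (intro exI[of _ z]) simp
    next
      assume "\<exists>z. length z = k \<and> w @ z \<in> ?M3 \<and> z \<notin> X"
      then obtain z where z: "length z = k" "w @ z \<in> ?M3" "z \<notin> X" by blast
      show "\<exists>z. length z = k \<and> w @ z \<in> ?M3 \<and> \<not> map (tev (w @ z)) (map Inl [k+k..<k+k+k]) \<in> X"
        using z e[OF z(1)] by (intro exI[of _ z]) simp
    qed
  qed
  have "dfn D (k + k) (\<lambda>w. \<exists>z. length z = k \<and> w @ z \<in> ?M3 \<and> z \<notin> X)"
    by (rule dfn_cong[OF ds d1 iff])
  hence RD: "R \<in> D (k + k)" unfolding R_def by (rule dfn_D[OF ds])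
  have psD: "ps Z \<in> D (k + k)" if Z: "Z \<in> D k" for Z
  proof -
    have "dfn D (k + k) (\<lambda>w. map (tev w) (map Inl [0..<k]) \<in> Z \<and> map (tev w) (map Inl [k..<k+k]) \<in> Z)"
      by (intro dfn_conj[OF ds] dfn_map[OF ds Z]) auto
    hence "dfn D (k + k) (\<lambda>w. take k w \<in> Z \<and> drop k w \<in> Z)"
      by (rule dfn_cong[OF ds]) (simp add: map_tev_Inl')
    thus ?thesis unfolding ps_def by (rule dfn_D[OF ds])
  qed
  define \<G> where "\<G> = insert R (ps ` F)"
  have GD: "\<G> \<subseteq> D (k + k)" using RD psD F(1) unfolding \<G>_def by blast
  have Gs: "\<G> \<prec> K" unfolding \<G>_def using small_insert_image[OF F(2)] .
  have empty: "tuples (k + k) \<inter> \<Inter>\<G> = {}"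
  proof (rule ccontr)
    assume "tuples (k + k) \<inter> \<Inter>\<G> \<noteq> {}"
    then obtain w where w: "length w = k + k" "w \<in> R" "\<forall>Z\<in>F. w \<in> ps Z" unfolding \<G>_def by blast
    obtain z where z: "length z = k" "w @ z \<in> ?M3" "z \<notin> X" using w(2) unfolding R_def by blast
    have wsplit: "w = take k w @ drop k w" by simp
    have l1: "length (take k w) = k" "length (drop k w) = k" using w(1) by auto
    have eq: "take k w @ drop k w @ z = w @ z" by (simp add: append_assoc[symmetric])
    have "take k w @ drop k w @ z \<in> ?M3" by (subst eq) (rule z(2))
    hence zz: "z = take k w \<otimes> drop k w" using mem_M3[OF l1] by blast
    have "take k w \<in> H" "drop k w \<in> H" using w(3) l1 unfolding H(1) ps_def by auto
    thus False using prod zz z(3) by blast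
  qed
  have sat': "\<And>n F. F \<subseteq> D n \<Longrightarrow> F \<prec> K \<Longrightarrow>
        (\<forall>F'. finite F' \<longrightarrow> F' \<subseteq> F \<longrightarrow> tuples n \<inter> \<Inter>F' \<noteq> {}) \<Longrightarrow> tuples n \<inter> \<Inter>F \<noteq> {}"
    using sat unfolding saturated_def by blast
  have "\<not> (\<forall>F'. finite F' \<longrightarrow> F' \<subseteq> \<G> \<longrightarrow> tuples (k + k) \<inter> \<Inter>F' \<noteq> {})"
    using sat'[OF GD Gs] empty by blast
  then obtain F' where F': "finite F'" "F' \<subseteq> \<G>" "tuples (k + k) \<inter> \<Inter>F' = {}" by blast
  have "F' - {R} \<subseteq> ps ` F" using F'(2) unfolding \<G>_def by blast
  moreover have "finite (F' - {R})" using F'(1) by simp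
  ultimately obtain F0 where F0: "F0 \<subseteq> F" "finite F0" "F' - {R} = ps ` F0"
    using finite_subset_image[of "F' - {R}" ps F] by blast
  show ?thesis
  proof (intro exI conjI ballI)
    show "finite F0" "F0 \<subseteq> F" using F0 by auto
    fix a b assume a: "a \<in> carrier Gr \<inter> \<Inter>F0" and b: "b \<in> carrier Gr \<inter> \<Inter>F0"
    show "a \<otimes> b \<in> X"
    proof (rule ccontr)
      assume nx: "a \<otimes> b \<notin> X"
      have la: "length a = k" "length b = k" using a b car_tuples by auto
      have abc: "a \<otimes> b \<in> carrier Gr" using a b by simp
      have lab: "length (a \<otimes> b) = k" using abc car_tuples by auto
      have m: "a @ b @ (a \<otimes> b) \<in> ?M3" by (rule mem_M3[OF la, THEN iffD2]) (use a b in simp)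
      have m': "(a @ b) @ (a \<otimes> b) \<in> ?M3" by (subst append_assoc) (rule m)
      have "a @ b \<in> R" unfolding R_def
        apply (rule CollectI, rule conjI)
         apply (simp add: la)
        apply (rule exI[of _ "a \<otimes> b"])
        by (intro conjI lab m' nx)
      moreover have "a @ b \<in> ps Z" if "Z \<in> F0" for Z using that a b la unfolding ps_def by auto
      ultimately have "a @ b \<in> \<Inter>F'" using F0(3) by blast
      moreover have "a @ b \<in> tuples (k + k)" using la by simp
      ultimately show False using F'(3) by blast
    qed
  qed
qed

end



context setting begin

lemma part2:
  assumes HD: "H \<in> D k" and Hs: "subgroup H Gr"
  shows "finite H \<or> H = carrier Gr \<or>
            (\<exists>r\<in>I. (subgroup (B r) Gr \<and> B r \<subseteq> H \<and> finite (cosets_in Gr H (B r))) \<or>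
                    (subgroup (Bm r) Gr \<and> Bm r \<subseteq> H \<and> finite (cosets_in Gr H (Bm r))))"
proof -
  have Hc: "H \<subseteq> carrier Gr" using subgroup.subset[OF Hs] .
  obtain S where S: "detd S H" using determ[OF boolean_Bas[OF HD Hc]] by blast
  obtain \<beta> H0 where b: "\<beta> \<in> Bs" and H0: "finite H0" "H0 \<subseteq> H" and cov: "H \<subseteq> (\<Union>h\<in>H0. tr Gr h \<beta>)"
    and mul: "\<forall>g\<in>\<beta>. \<exists>y1\<in>H. \<exists>y2\<in>H. g = y1 \<otimes> y2"
    using detd_core[OF S Hs subset_refl] by blast
  have bH: "\<beta> \<subseteq> H"
  proof
    fix g assume "g \<in> \<beta>"
    then obtain y1 y2 where "y1 \<in> H" "y2 \<in> H" "g = y1 \<otimes> y2" using mul by blast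
    thus "g \<in> H" using subgroup.m_closed[OF Hs] by simp
  qed
  have bs: "subgroup \<beta> Gr" using Bs_subgroup[OF b] .
  have fin: "finite (cosets_in Gr H \<beta>)"
  proof -
    have "cosets_in Gr H \<beta> \<subseteq> (\<lambda>h. tr Gr h \<beta>) ` H0"
    proof
      fix C assume "C \<in> cosets_in Gr H \<beta>"
      then obtain a where a: "a \<in> H" "C = tr Gr a \<beta>" unfolding cosets_in_def tr_def by blast
      then obtain h where h: "h \<in> H0" "a \<in> tr Gr h \<beta>" using cov by blast
      have hc: "h \<in> carrier Gr" using h(1) H0(2) Hc by blast
      have "tr Gr a \<beta> = tr Gr h \<beta>" by (rule G.tr_same[OF bs hc h(2)])
      thus "C \<in> (\<lambda>h. tr Gr h \<beta>) ` H0" using a h by blast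
    qed
    thus ?thesis by (rule finite_subset[OF _ finite_imageI[OF H0(1)]])
  qed
  show ?thesis using b
  proof (cases rule: Bs_cases)
    case (B r)
    thus ?thesis using bs bH fin by blast
  next
    case (Bm r)
    thus ?thesis using bs bH fin by blast
  next
    case one
    have "H \<subseteq> H0"
    proof
      fix x assume "x \<in> H"
      then obtain h where h: "h \<in> H0" "x \<in> tr Gr h \<beta>" using cov by blast
      have hc: "h \<in> carrier Gr" using h(1) H0(2) Hc by blast
      have "x = h \<otimes> \<one>" using h(2) one unfolding tr_def by simp
      thus "x \<in> H0" using h hc by simp
    qed
    thus ?thesis using H0(1) finite_subset by blast
  next
    case car
    thus ?thesis using bH Hc by blast
  qed
qed

lemma key:
  assumes F: "F \<subseteq> D k" "F \<prec> K" and H: "H = tuples k \<inter> \<Inter>F" and Hs: "subgroup H Gr"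
    and Z: "Z \<in> F"
  shows "\<exists>S. S \<in> D k \<and> subgroup S Gr \<and> H \<subseteq> S \<and> S \<subseteq> Z"
proof -
  have Hc: "H \<subseteq> carrier Gr" using subgroup.subset[OF Hs] .
  have HH: "\<forall>a\<in>H. \<forall>b\<in>H. a \<otimes> b \<in> H" using subgroup.m_closed[OF Hs] by blast
  define X where "X = carrier Gr \<inter> Z"
  have XD: "X \<in> D k" unfolding X_def using ds_inter[OF ds G_def] Z F(1) by blast
  have HX: "H \<subseteq> X" unfolding X_def using Hc H Z by blast
  obtain F1 where F1: "finite F1" "F1 \<subseteq> F" and P1: "\<forall>a\<in>carrier Gr \<inter> \<Inter>F1. \<forall>b\<in>carrier Gr \<inter> \<Inter>F1. a \<otimes> b \<in> X"
    using compact[OF F H Hc XD] HH HX by blast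
  define Y1 where "Y1 = carrier Gr \<inter> \<Inter>F1"
  have Y1D: "Y1 \<in> D k" unfolding Y1_def using ds_finite_Inter[OF ds F1(1) _ G_def] F1(2) F(1) by blast
  have HY1: "H \<subseteq> Y1" unfolding Y1_def using Hc H F1(2) by blast
  obtain F2 where F2: "finite F2" "F2 \<subseteq> F" and P2: "\<forall>a\<in>carrier Gr \<inter> \<Inter>F2. \<forall>b\<in>carrier Gr \<inter> \<Inter>F2. a \<otimes> b \<in> Y1"
    using compact[OF F H Hc Y1D] HH HY1 by blast
  define Y where "Y = carrier Gr \<inter> \<Inter>F2"
  have YD: "Y \<in> D k" unfolding Y_def using ds_finite_Inter[OF ds F2(1) _ G_def] F2(2) F(1) by blast
  have HY: "H \<subseteq> Y" unfolding Y_def using Hc H F2(2) by blast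
  have Yc: "Y \<subseteq> carrier Gr" unfolding Y_def by blast
  obtain S0 where S0: "detd S0 Y" using determ[OF boolean_Bas[OF YD Yc]] by blast
  obtain \<beta> H0 where b: "\<beta> \<in> Bs" and H0: "finite H0" "H0 \<subseteq> H" and cov: "H \<subseteq> (\<Union>h\<in>H0. tr Gr h \<beta>)"
    and mul: "\<forall>g\<in>\<beta>. \<exists>y1\<in>Y. \<exists>y2\<in>Y. g = y1 \<otimes> y2"
    using detd_core[OF S0 Hs HY] by blast
  have bs: "subgroup \<beta> Gr" using Bs_subgroup[OF b] .
  have bc: "\<beta> \<subseteq> carrier Gr" using subgroup.subset[OF bs] .
  define S where "S = {h \<otimes> g | h g. h \<in> H \<and> g \<in> \<beta>}"
  have SX: "S \<subseteq> X"
  proof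
    fix z assume "z \<in> S"
    then obtain h g where hg: "h \<in> H" "g \<in> \<beta>" "z = h \<otimes> g" unfolding S_def by blast
    obtain y1 y2 where y: "y1 \<in> Y" "y2 \<in> Y" "g = y1 \<otimes> y2" using mul hg(2) by blast
    have "y1 \<otimes> y2 \<in> Y1" using P2 y(1,2) unfolding Y_def by blast
    moreover have "h \<in> Y1" using HY1 hg(1) by blast
    ultimately have "h \<otimes> (y1 \<otimes> y2) \<in> X" using P1 unfolding Y1_def by blast
    thus "z \<in> X" using hg y by simp
  qed
  have HS: "H \<subseteq> S"
  proof
    fix h assume h: "h \<in> H"
    have "h = h \<otimes> \<one>" using h Hc by auto
    moreover have "\<one> \<in> \<beta>" using subgroup.one_closed[OF bs] .
    ultimately show "h \<in> S" unfolding S_def using h by blast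
  qed
  have Ssub: "subgroup S Gr"
  proof (rule G.subgroupI)
    show "S \<subseteq> carrier Gr"
    proof
      fix z assume "z \<in> S"
      then obtain h g where hg: "h \<in> H" "g \<in> \<beta>" "z = h \<otimes> g" unfolding S_def by blast
      thus "z \<in> carrier Gr" using Hc bc by auto
    qed
    show "S \<noteq> {}" using HS subgroup.one_closed[OF Hs] by blast
  next
    fix z assume "z \<in> S"
    then obtain h g where hg: "h \<in> H" "g \<in> \<beta>" "z = h \<otimes> g" unfolding S_def by blast
    have hc: "h \<in> carrier Gr" and gc: "g \<in> carrier Gr" using hg Hc bc by auto
    have "inv z = inv h \<otimes> inv g" using hg(3) hc gc by (simp add: G.inv_mult)
    moreover have "inv h \<in> H" using subgroup.m_inv_closed[OF Hs hg(1)] .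
    moreover have "inv g \<in> \<beta>" using subgroup.m_inv_closed[OF bs hg(2)] .
    ultimately show "inv z \<in> S" unfolding S_def by blast
  next
    fix z z' assume "z \<in> S" "z' \<in> S"
    then obtain h g h' g' where hg: "h \<in> H" "g \<in> \<beta>" "z = h \<otimes> g" "h' \<in> H" "g' \<in> \<beta>" "z' = h' \<otimes> g'"
      unfolding S_def by blast
    have c: "h \<in> carrier Gr" "g \<in> carrier Gr" "h' \<in> carrier Gr" "g' \<in> carrier Gr" using hg Hc bc by auto
    have "z \<otimes> z' = (h \<otimes> h') \<otimes> (g \<otimes> g')" using hg(3,6) c by (simp add: G.m_ac)
    moreover have "h \<otimes> h' \<in> H" using subgroup.m_closed[OF Hs hg(1) hg(4)] .
    moreover have "g \<otimes> g' \<in> \<beta>" using subgroup.m_closed[OF bs hg(2) hg(5)] .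
    ultimately show "z \<otimes> z' \<in> S" unfolding S_def by blast
  qed
  have Seq: "S = (\<Union>h\<in>H0. tr Gr h \<beta>)"
  proof (intro equalityI subsetI)
    fix z assume "z \<in> S"
    then obtain h g where hg: "h \<in> H" "g \<in> \<beta>" "z = h \<otimes> g" unfolding S_def by blast
    then obtain h0 where h0: "h0 \<in> H0" "h \<in> tr Gr h0 \<beta>" using cov by blast
    then obtain g0 where g0: "g0 \<in> \<beta>" "h = h0 \<otimes> g0" unfolding tr_def by blast
    have c: "h0 \<in> carrier Gr" "g0 \<in> carrier Gr" "g \<in> carrier Gr" using h0(1) H0(2) Hc g0(1) hg(2) bc by auto
    have "z = h0 \<otimes> (g0 \<otimes> g)" using hg(3) g0(2) c by (simp add: G.m_assoc)
    moreover have "g0 \<otimes> g \<in> \<beta>" using subgroup.m_closed[OF bs g0(1) hg(2)] .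
    ultimately show "z \<in> (\<Union>h\<in>H0. tr Gr h \<beta>)" using h0(1) unfolding tr_def by blast
  next
    fix z assume "z \<in> (\<Union>h\<in>H0. tr Gr h \<beta>)"
    then obtain h0 g where "h0 \<in> H0" "g \<in> \<beta>" "z = h0 \<otimes> g" unfolding tr_def by blast
    thus "z \<in> S" unfolding S_def using H0(2) by blast
  qed
  have SD: "S \<in> D k"
  proof -
    have "(\<lambda>h. tr Gr h \<beta>) ` H0 \<subseteq> D k"
    proof
      fix C assume "C \<in> (\<lambda>h. tr Gr h \<beta>) ` H0"
      then obtain h where h: "h \<in> H0" "C = tr Gr h \<beta>" by blast
      have hc: "h \<in> carrier Gr" using h(1) H0(2) Hc by blast
      show "C \<in> D k" using tr_D[OF Bs_D[OF b] bc hc] h(2) by simp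
    qed
    thus ?thesis unfolding Seq by (rule ds_finite_Union[OF ds finite_imageI[OF H0(1)]])
  qed
  show ?thesis using SD Ssub HS SX unfolding X_def by blast
qed

lemma part1:
  assumes td: "type_definable D K k H" and Hs: "subgroup H Gr"
  shows "\<exists>F. F \<prec> K \<and> (\<forall>H'\<in>F. H' \<in> D k \<and> subgroup H' Gr) \<and> H = carrier Gr \<inter> \<Inter>F"
proof -
  obtain F where F: "F \<subseteq> D k" "F \<prec> K" and H: "H = tuples k \<inter> \<Inter>F"
    using td unfolding type_definable_def by blast
  have Hc: "H \<subseteq> carrier Gr" using subgroup.subset[OF Hs] .
  define f where "f Z = (SOME S. S \<in> D k \<and> subgroup S Gr \<and> H \<subseteq> S \<and> S \<subseteq> Z)" for Z
  have fZ: "f Z \<in> D k \<and> subgroup (f Z) Gr \<and> H \<subseteq> f Z \<and> f Z \<subseteq> Z" if "Z \<in> F" for Z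
    unfolding f_def by (rule someI_ex[OF key[OF F H Hs that]])
  show ?thesis
  proof (intro exI conjI ballI)
    show "f ` F \<prec> K" using image_lepoll F(2) by (rule lesspoll_trans1)
    fix H' assume "H' \<in> f ` F"
    thus "H' \<in> D k" "subgroup H' Gr" using fZ by auto
  next
    show "H = carrier Gr \<inter> \<Inter>(f ` F)"
    proof (intro equalityI subsetI)
      fix x assume "x \<in> H" thus "x \<in> carrier Gr \<inter> \<Inter>(f ` F)" using Hc fZ by blast
    next
      fix x assume x: "x \<in> carrier Gr \<inter> \<Inter>(f ` F)"
      have "x \<in> Z" if "Z \<in> F" for Z using x fZ[OF that] that by blast
      moreover have "x \<in> tuples k" using x car_tuples by blast
      ultimately show "x \<in> H" unfolding H by blast
    qed
  qed
qed

end

theorem lemma3p7: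
  fixes D :: "nat \<Rightarrow> 'm list set set" and K :: "'k set"
    and Gr :: "'m list monoid" and k :: nat
    and I :: "'m list set" and l :: nat and le :: "'m list \<Rightarrow> 'm list \<Rightarrow> bool"
    and v :: "'m list \<Rightarrow> 'm list"
  defines "B \<equiv> \<lambda>r. {a \<in> carrier Gr. le r (v a)}"
      and "Bm \<equiv> \<lambda>r. {a \<in> carrier Gr. le r (v a) \<and> r \<noteq> v a}"
  assumes struct: "def_structure D"
    and sat: "saturated D K" and uncountable: "\<not> K \<lesssim> (UNIV :: nat set)"
    and grp: "comm_group Gr"
    and G_def: "carrier Gr \<in> D k"
    and mult_def: "{xs @ ys @ (xs \<otimes>\<^bsub>Gr\<^esub> ys) | xs ys. xs \<in> carrier Gr \<and> ys \<in> carrier Gr} \<in> D (3 * k)"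
    and I_def: "I \<in> D l"
    and le_def: "{xs @ ys | xs ys. xs \<in> I \<and> ys \<in> I \<and> le xs ys} \<in> D (2 * l)"
    and le_refl: "\<forall>x\<in>I. le x x"
    and le_antisym: "\<forall>x\<in>I. \<forall>y\<in>I. le x y \<longrightarrow> le y x \<longrightarrow> x = y"
    and le_trans: "\<forall>x\<in>I. \<forall>y\<in>I. \<forall>z\<in>I. le x y \<longrightarrow> le y z \<longrightarrow> le x z"
    and le_total: "\<forall>x\<in>I. \<forall>y\<in>I. le x y \<or> le y x"
    and v_into: "v ` carrier Gr \<subseteq> I"
    and v_def: "{xs @ v xs | xs. xs \<in> carrier Gr} \<in> D (k + l)"
    and v_add: "\<forall>a\<in>carrier Gr. \<forall>b\<in>carrier Gr.
                  le (v a) (v (a \<otimes>\<^bsub>Gr\<^esub> b)) \<or> le (v b) (v (a \<otimes>\<^bsub>Gr\<^esub> b))"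
    and v_neg: "\<forall>a\<in>carrier Gr. v (inv\<^bsub>Gr\<^esub> a) = v a"
    and v_zero_max: "\<forall>r\<in>I. le r (v \<one>\<^bsub>Gr\<^esub>)"
    and v_zero_only: "\<forall>a\<in>carrier Gr. v a = v \<one>\<^bsub>Gr\<^esub> \<longrightarrow> a = \<one>\<^bsub>Gr\<^esub>"
    and boolean: "\<forall>X\<in>D k. X \<subseteq> carrier Gr \<longrightarrow>
        X \<in> boolcomb (carrier Gr)
          {(\<lambda>x. a \<otimes>\<^bsub>Gr\<^esub> x) ` Y | a Y. a \<in> carrier Gr \<and>
             (Y \<in> B ` I \<or> Y \<in> Bm ` I \<or> Y = {\<one>\<^bsub>Gr\<^esub>} \<or> Y = carrier Gr)}"
    and quot_infinite: "\<forall>r\<in>I. le r (v \<one>\<^bsub>Gr\<^esub>) \<and> r \<noteq> v \<one>\<^bsub>Gr\<^esub> \<longrightarrow>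
        infinite (cosets_in Gr (B r) (Bm r))"
  shows "(\<forall>H. type_definable D K k H \<and> subgroup H Gr \<longrightarrow>
            (\<exists>F. F \<prec> K \<and> (\<forall>H'\<in>F. H' \<in> D k \<and> subgroup H' Gr) \<and>
                 H = carrier Gr \<inter> \<Inter>F))
       \<and> (\<forall>H\<in>D k. subgroup H Gr \<longrightarrow>
            finite H \<or> H = carrier Gr \<or>
            (\<exists>r\<in>I. (subgroup (B r) Gr \<and> B r \<subseteq> H \<and> finite (cosets_in Gr H (B r))) \<or>
                    (subgroup (Bm r) Gr \<and> Bm r \<subseteq> H \<and> finite (cosets_in Gr H (Bm r)))))"
  proof -
  have st: "setting D K Gr k I l le v B Bm"
    by (rule setting.intro[OF B_def[THEN meta_eq_to_obj_eq] Bm_def[THEN meta_eq_to_obj_eq] struct sat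
          uncountable grp G_def mult_def I_def le_def le_refl le_antisym le_trans le_total v_into v_def
          v_add v_neg v_zero_max v_zero_only boolean quot_infinite])
  interpret S: setting D K Gr k I l le v B Bm by (rule st)
  show ?thesis
  proof (intro conjI allI impI ballI)
    fix H assume "type_definable D K k H \<and> subgroup H Gr"
    thus "\<exists>F. F \<prec> K \<and> (\<forall>H'\<in>F. H' \<in> D k \<and> subgroup H' Gr) \<and> H = carrier Gr \<inter> \<Inter>F"
      using S.part1 by blast
  next
    fix H assume "H \<in> D k" "subgroup H Gr"
    thus "finite H \<or> H = carrier Gr \<or>
            (\<exists>r\<in>I. (subgroup (B r) Gr \<and> B r \<subseteq> H \<and> finite (cosets_in Gr H (B r))) \<or>
                    (subgroup (Bm r) Gr \<and> Bm r \<subseteq> H \<and> finite (cosets_in Gr H (Bm r))))"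
      by (rule S.part2)
  qed
qed

end
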